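(* Let $i\geq 1$, $\omega_i=e^{2\pi i/5^i}$, and $f\in\mathbb Z[x]$ with $5\nmid N_i(f)$. (i) There exist a unit $u(\omega_i)$ of $\mathbb Z[\omega_i]$ and $h\in\mathbb Z[x]$ with $u(\omega_i)f(\omega_i)=1+(\omega_i-1)^3h(\omega_i)$; moreover one can take $u(x)=\pm x^I(1+x)^J(x^4+x)^{2K}$ with $J\in\{0,1\}$ and $0\leq I,K\leq 4$. (ii) There do not exist units $u_1(\omega_i),u_2(\omega_i)$ of $\mathbb Z[\omega_i]$ and $h_1,h_2\in\mathbb Z[x]$ with $u_1(\omega_i)f(\omega_i)=1+(\omega_i-1)^3h_1(\omega_i)$, $u_2(\omega_i)f(\omega_i)=1+(\omega_i-1)^3h_2(\omega_i)$, $5\mid h_1(1)$ and $5\nmid h_2(1)$.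
   Context: $N_i(f)=\prod_{1\leq j\leq 5^i,\ 5\nmid j}f(\omega_i^j)$. *)

theory Defs
  imports Complex_Main "HOL-Computational_Algebra.Polynomial"
begin

definition omega :: "nat \<Rightarrow> complex" where
  "omega i = exp (2 * of_real pi * \<i> / of_nat (5 ^ i))"

definition ev :: "int poly \<Rightarrow> complex \<Rightarrow> complex" where
  "ev p z = poly (map_poly of_int p) z"

definition Nnorm :: "nat \<Rightarrow> int poly \<Rightarrow> complex" where
  "Nnorm i f = (\<Prod>j\<in>{j. 1 \<le> j \<and> j \<le> 5 ^ i \<and> \<not> (5::nat) dvd j}. ev f (omega i ^ j))"

definition Zomega :: "nat \<Rightarrow> complex set" where
  "Zomega i = {ev p (omega i) | p. True}"

definition Zomega_unit :: "nat \<Rightarrow> complex \<Rightarrow> bool" where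
  "Zomega_unit i u \<longleftrightarrow> u \<in> Zomega i \<and> (\<exists>v\<in>Zomega i. u * v = 1)"

end

theory Submission
  imports Defs "HOL-Analysis.Analysis" "HOL-Computational_Algebra.Polynomial_Factorial"
begin


lemma ev_pCons [simp]: "ev (pCons a p) z = of_int a + z * ev p z"
  by (simp add: ev_def map_poly_pCons)
lemma ev_0 [simp]: "ev 0 z = 0"
  by (simp add: ev_def)
lemma ev_const [simp]: "ev [:a:] z = of_int a"
  by simp
lemma ev_1 [simp]: "ev 1 z = 1"
  by (simp add: one_pCons)
lemma ev_add [simp]: "ev (p + q) z = ev p z + ev q z"
  by (induction p q rule: poly_induct2) (simp_all add: algebra_simps)
lemma ev_smult [simp]: "ev (smult a p) z = of_int a * ev p z"
  by (induction p) (simp_all add: algebra_simps)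
lemma ev_mult [simp]: "ev (p * q) z = ev p z * ev q z"
  by (induction p) (simp_all add: algebra_simps)
lemma ev_minus [simp]: "ev (- p) z = - ev p z"
  by (induction p) (simp_all add: algebra_simps)
lemma ev_diff [simp]: "ev (p - q) z = ev p z - ev q z"
  using ev_add[of p "-q" z] by simp
lemma ev_power [simp]: "ev (p ^ k) z = ev p z ^ k"
  by (induction k) simp_all
lemma ev_prod: "ev (\<Prod>x\<in>A. f x) z = (\<Prod>x\<in>A. ev (f x) z)"
  by (induction A rule: infinite_finite_induct) simp_all
lemma ev_sum: "ev (\<Sum>x\<in>A. f x) z = (\<Sum>x\<in>A. ev (f x) z)"
  by (induction A rule: infinite_finite_induct) simp_all
lemma ev_pcompose [simp]: "ev (pcompose p q) z = ev p (ev q z)"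
  by (induction p) (simp_all add: pcompose_pCons)
lemma ev_numeral [simp]: "ev (numeral k) z = numeral k"
  by (metis ev_const of_int_numeral of_int_poly)
lemma ev_cnj: "cnj (ev p z) = ev p (cnj z)"
  by (induction p) simp_all
lemma ev_altdef: "ev p z = (\<Sum>d\<le>degree p. of_int (coeff p d) * z ^ d)"
  unfolding ev_def poly_altdef by (simp add: degree_map_poly coeff_map_poly)

lemma omega_pow: "omega i ^ j = exp (2 * complex_of_real pi * \<i> * of_nat j / of_nat (5 ^ i))"
proof -
  have "omega i ^ j = exp (of_nat j * (2 * complex_of_real pi * \<i> / of_nat (5 ^ i)))"
    unfolding omega_def by (rule exp_of_nat_mult[symmetric])
  then show ?thesis by (simp add: algebra_simps)
qed

lemma omega_pow_eq_1: "omega i ^ j = 1 \<longleftrightarrow> 5 ^ i dvd j"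
  unfolding omega_pow by (rule complex_root_unity_eq_1) simp

lemma omega_pow_n [simp]: "omega i ^ (5 ^ i) = 1"
  by (simp add: omega_pow_eq_1)

lemma omega_ne0 [simp]: "omega i \<noteq> 0"
  by (simp add: omega_def)

lemma omega_pow_mod: "omega i ^ (j mod 5 ^ i) = omega i ^ j"
proof -
  have "omega i ^ j = omega i ^ ((j div 5^i) * 5^i + j mod 5^i)" by (simp only: div_mult_mod_eq)
  also have "\<dots> = (omega i ^ 5^i) ^ (j div 5^i) * omega i ^ (j mod 5^i)"
    by (simp only: power_add power_mult mult.commute[of "j div 5^i"])
  also have "\<dots> = omega i ^ (j mod 5^i)" by simp
  finally show ?thesis by simp
qed

lemma omega_pow_eq: "a mod 5 ^ i = b mod 5 ^ i \<Longrightarrow> omega i ^ a = omega i ^ b"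
  by (metis omega_pow_mod)

lemma norm_omega [simp]: "norm (omega i) = 1"
  unfolding omega_def by (simp add: norm_exp_eq_Re)

lemma cnj_omega_pow: "cnj (omega i ^ j) = omega i ^ ((5 ^ i - 1) * j)"
proof -
  have n: "(5::nat) ^ i \<ge> 1" by simp
  have "omega i ^ j * cnj (omega i ^ j) = 1"
    by (metis complex_norm_square norm_omega norm_power of_real_1 power_one)
  moreover have "omega i ^ j * omega i ^ ((5 ^ i - 1) * j) = 1"
  proof -
    have "omega i ^ j * omega i ^ ((5 ^ i - 1) * j) = omega i ^ (5^i * j)"
      using n by (simp add: power_add[symmetric] algebra_simps diff_mult_distrib)
    also have "\<dots> = 1" by (simp add: power_mult)
    finally show ?thesis .
  qed
  ultimately show ?thesis
    by (metis mult.left_commute mult.right_neutral mult_1)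
qed

lemma omega_roots: "z ^ (5 ^ i) = 1 \<Longrightarrow> \<exists>k<5 ^ i. z = omega i ^ k"
proof -
  assume "z ^ (5 ^ i) = 1"
  then have "z \<in> {z. z ^ (5 ^ i) = 1}" by simp
  also have "\<dots> = {exp (2 * complex_of_real pi * \<i> * complex_of_nat j / complex_of_nat (5 ^ i)) | j. j < 5 ^ i}"
    by (rule complex_roots_unity) simp
  finally show ?thesis unfolding omega_pow by blast
qed

lemma ev_monom [simp]: "ev (monom c k) z = of_int c * z ^ k"
  by (simp add: monom_altdef)

section \<open>Congruences modulo 5 and t^k\<close>

definition Jm :: "nat \<Rightarrow> int poly \<Rightarrow> bool" where
  "Jm k A \<longleftrightarrow> (\<forall>j<k. (5::int) dvd coeff A j)"

definition F5 :: "int poly \<Rightarrow> bool" where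
  "F5 A \<longleftrightarrow> (\<forall>j. (5::int) dvd coeff A j)"

lemma Jm_0 [simp]: "Jm k 0" by (simp add: Jm_def)
lemma F5_0 [simp]: "F5 0" by (simp add: F5_def)
lemma Jm_add: "Jm k A \<Longrightarrow> Jm k B \<Longrightarrow> Jm k (A + B)" by (simp add: Jm_def)
lemma Jm_diff: "Jm k A \<Longrightarrow> Jm k B \<Longrightarrow> Jm k (A - B)" by (simp add: Jm_def)
lemma Jm_uminus: "Jm k A \<Longrightarrow> Jm k (- A)" by (simp add: Jm_def)
lemma F5_add: "F5 A \<Longrightarrow> F5 B \<Longrightarrow> F5 (A + B)" by (simp add: F5_def)
lemma F5_diff: "F5 A \<Longrightarrow> F5 B \<Longrightarrow> F5 (A - B)" by (simp add: F5_def)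
lemma F5_uminus: "F5 A \<Longrightarrow> F5 (- A)" by (simp add: F5_def)
lemma F5_smult: "F5 (smult 5 A)" by (simp add: F5_def)
lemma F5_Jm: "F5 A \<Longrightarrow> Jm k A" by (simp add: F5_def Jm_def)
lemma Jm_smult: "Jm k A \<Longrightarrow> Jm k (smult a A)" by (simp add: Jm_def)
lemma Jm_mono: "Jm k A \<Longrightarrow> k' \<le> k \<Longrightarrow> Jm k' A" by (simp add: Jm_def)

lemma Jm_mult: "Jm k A \<Longrightarrow> Jm k (A * B)"
  unfolding Jm_def coeff_mult by (auto intro!: dvd_sum)
lemma Jm_mult2: "Jm k B \<Longrightarrow> Jm k (A * B)"
  using Jm_mult[of k B A] by (simp add: mult.commute)
lemma F5_mult: "F5 A \<Longrightarrow> F5 (A * B)"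
  unfolding F5_def coeff_mult by (auto intro!: dvd_sum)
lemma F5_mult2: "F5 B \<Longrightarrow> F5 (A * B)"
  using F5_mult[of B A] by (simp add: mult.commute)

lemma Jm_power: "Jm k (A - B) \<Longrightarrow> Jm k (A ^ e - B ^ e)"
proof (induction e)
  case (Suc e)
  have "A ^ Suc e - B ^ Suc e = A * (A ^ e - B ^ e) + (A - B) * B ^ e"
    by (simp add: algebra_simps)
  then show ?case using Suc by (metis Jm_add Jm_mult Jm_mult2)
qed simp

lemma F5_power: "F5 (A - B) \<Longrightarrow> F5 (A ^ e - B ^ e)"
proof (induction e)
  case (Suc e)
  have "A ^ Suc e - B ^ Suc e = A * (A ^ e - B ^ e) + (A - B) * B ^ e"
    by (simp add: algebra_simps)
  then show ?case using Suc by (metis F5_add F5_mult F5_mult2)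
qed simp

lemma Jm_trans: "Jm k (A - B) \<Longrightarrow> Jm k (B - C) \<Longrightarrow> Jm k (A - C)"
  using Jm_add[of k "A - B" "B - C"] by simp

lemma Jm_sym: "Jm k (A - B) \<Longrightarrow> Jm k (B - A)"
  using Jm_uminus[of k "A - B"] by simp

lemma Jm_cong_mult: "Jm k (A - B) \<Longrightarrow> Jm k (C - D) \<Longrightarrow> Jm k (A * C - B * D)"
proof -
  assume "Jm k (A - B)" "Jm k (C - D)"
  moreover have "A * C - B * D = (A - B) * C + B * (C - D)" by (simp add: algebra_simps)
  ultimately show ?thesis by (metis Jm_add Jm_mult Jm_mult2)
qed

lemma F5_trans: "F5 (A - B) \<Longrightarrow> F5 (B - C) \<Longrightarrow> F5 (A - C)"
  using F5_add[of "A - B" "B - C"] by simp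

lemma F5_cong_mult: "F5 (A - B) \<Longrightarrow> F5 (C - D) \<Longrightarrow> F5 (A * C - B * D)"
proof -
  assume "F5 (A - B)" "F5 (C - D)"
  moreover have "A * C - B * D = (A - B) * C + B * (C - D)" by (simp add: algebra_simps)
  ultimately show ?thesis by (metis F5_add F5_mult F5_mult2)
qed

section \<open>Shift and the cyclotomic polynomial\<close>

definition Tsh :: "int poly \<Rightarrow> int poly" where
  "Tsh p = pcompose p [:1, 1:]"

lemma Tsh_add [simp]: "Tsh (p + q) = Tsh p + Tsh q" by (simp add: Tsh_def pcompose_add)
lemma Tsh_diff [simp]: "Tsh (p - q) = Tsh p - Tsh q" by (simp add: Tsh_def pcompose_diff)
lemma Tsh_mult [simp]: "Tsh (p * q) = Tsh p * Tsh q" by (simp add: Tsh_def pcompose_mult)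
lemma Tsh_const [simp]: "Tsh [:a:] = [:a:]" by (simp add: Tsh_def)
lemma Tsh_1 [simp]: "Tsh 1 = 1" by (simp add: Tsh_def pcompose_1)
lemma Tsh_power [simp]: "Tsh (p ^ k) = Tsh p ^ k" by (induction k) simp_all
lemma Tsh_smult [simp]: "Tsh (smult a p) = smult a (Tsh p)" by (simp add: Tsh_def pcompose_smult)
lemma Tsh_x [simp]: "Tsh [:0, 1:] = [:1, 1:]" by (simp add: Tsh_def pcompose_pCons)
lemma Tsh_X [simp]: "Tsh [:-1, 1:] = [:0, 1:]" by (simp add: Tsh_def pcompose_pCons)
lemma Tsh_monom [simp]: "Tsh (monom 1 k) = [:1, 1:] ^ k" by (simp add: monom_altdef)
lemma coeff0_Tsh: "coeff (Tsh p) 0 = poly p 1"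
  by (simp add: Tsh_def poly_0_coeff_0[symmetric] poly_pcompose)
lemma degree_Tsh [simp]: "degree (Tsh p) = degree p" by (simp add: Tsh_def degree_pcompose)

definition Phi5 :: "nat \<Rightarrow> int poly" where
  "Phi5 m = 1 + monom 1 m + monom 1 (2*m) + monom 1 (3*m) + monom 1 (4*m)"

lemma geo5: "(1 + y + y^2 + y^3 + y^4) * (y - 1) = y ^ 5 - (1::'a::comm_ring_1)"
  by (simp add: algebra_simps eval_nat_numeral)

lemma monom_mult_pow: "monom (1::int) (k * m) = monom 1 m ^ k"
  by (simp add: monom_altdef mult.commute[of k] power_mult)

lemma five_poly: "(5::int poly) = [:5:]"
proof -
  have "(of_int 5 :: int poly) = [:of_int 5:]" by (rule of_int_poly)
  then show ?thesis by simp
qed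

lemma five_mult: "(5::int poly) * p = smult 5 p"
  by (simp add: five_poly)

lemma Phi5_mult: "Phi5 m * (monom 1 m - 1) = monom 1 (5 * m) - 1"
proof -
  have "Phi5 m = 1 + monom 1 m + monom 1 m ^ 2 + monom 1 m ^ 3 + monom 1 m ^ 4"
    unfolding Phi5_def by (simp only: monom_mult_pow)
  then show ?thesis by (simp only: geo5 monom_mult_pow)
qed

lemma ev_Phi5: "ev (Phi5 m) z = 1 + z ^ m + z ^ (2*m) + z ^ (3*m) + z ^ (4*m)"
  by (simp add: Phi5_def)

lemma frob_step: "F5 ((1 + y) ^ 5 - (1 + y ^ 5))"
proof -
  have "(1 + y) ^ 5 - (1 + y ^ 5) = 5 * (y + 2 * y^2 + 2 * y^3 + y^4)"
    by (simp add: algebra_simps eval_nat_numeral)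
  then have "(1 + y) ^ 5 - (1 + y ^ 5) = smult 5 (y + 2 * y^2 + 2 * y^3 + y^4)"
    by (simp only: five_mult)
  then show ?thesis by (simp add: F5_smult)
qed

lemma frob: "F5 ([:1, 1:] ^ (5 ^ a) - (1 + monom 1 (5 ^ a)))"
proof (induction a)
  case 0
  then show ?case by (simp add: monom_altdef one_pCons)
next
  case (Suc a)
  have "F5 (([:1, 1:] ^ (5 ^ a)) ^ 5 - (1 + monom 1 (5 ^ a)) ^ 5)"
    by (rule F5_power[OF Suc])
  moreover have "F5 ((1 + monom 1 (5 ^ a)) ^ 5 - (1 + monom 1 (5 ^ a) ^ 5))"
    by (rule frob_step)
  ultimately have "F5 (([:1, 1:] ^ (5 ^ a)) ^ 5 - (1 + monom 1 (5 ^ a) ^ 5))"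
    by (rule F5_trans)
  moreover have "monom (1::int) (5 ^ a) ^ 5 = monom 1 (5 ^ Suc a)"
    by (metis monom_mult_pow power_Suc mult.commute)
  ultimately show ?case by (simp add: power_mult[symmetric] mult.commute)
qed

lemma not5_mult: "\<not> (5::int) dvd a \<Longrightarrow> \<not> 5 dvd b \<Longrightarrow> \<not> 5 dvd a * b"
proof -
  have p: "prime (5::int)" by simp
  show "\<not> (5::int) dvd a \<Longrightarrow> \<not> 5 dvd b \<Longrightarrow> \<not> 5 dvd a * b"
    using prime_dvd_mult_iff[OF p] by blast
qed

lemma F5_cancel_monom: "F5 (P * monom 1 m) \<Longrightarrow> F5 P"
  unfolding F5_def
proof
  fix j assume "\<forall>j. (5::int) dvd coeff (P * monom 1 m) j"
  then have "5 dvd coeff (monom 1 m * P) (j + m)" by (simp add: mult.commute)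
  then show "5 dvd coeff P j" by (simp add: coeff_monom_mult)
qed

lemma TPhi_F5:
  assumes "m = 5 ^ a"
  shows "F5 (Tsh (Phi5 m) - monom 1 (4*m))"
proof -
  define P where "P = Tsh (Phi5 m)"
  define A where "A = ([:1,1:] :: int poly) ^ m"
  define B where "B = ([:1,1:] :: int poly) ^ (5 * m)"
  have e1: "P * (A - 1) = B - 1"
    using arg_cong[OF Phi5_mult[of m], of Tsh] by (simp add: P_def A_def B_def)
  have f1: "F5 (A - (1 + monom 1 m))" using frob[of a] by (simp add: A_def assms)
  have f2: "F5 (B - (1 + monom 1 (5*m)))" using frob[of "Suc a"] by (simp add: B_def assms)
  have "(P - monom 1 (4*m)) * monom 1 m = P * monom 1 m - monom 1 (5*m)"
    by (simp add: algebra_simps mult_monom)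
  also have "\<dots> = (B - (1 + monom 1 (5*m))) - P * (A - (1 + monom 1 m))"
    using e1 by (simp add: algebra_simps)
  finally have "F5 ((P - monom 1 (4*m)) * monom 1 m)"
    using f1 f2 by (metis F5_diff F5_mult2)
  then show ?thesis unfolding P_def by (rule F5_cancel_monom)
qed

lemma Phi5_decomp: "Phi5 m = (1 + monom 1 m + monom 1 (2*m) + monom 1 (3*m)) + monom 1 (4*m)"
  by (simp add: Phi5_def)

lemma degree_Phi5_rest:
  assumes "m \<ge> 1"
  shows "degree (1 + monom (1::int) m + monom 1 (2*m) + monom 1 (3*m)) < 4 * m"
proof -
  have "degree (1 + monom (1::int) m + monom 1 (2*m) + monom 1 (3*m)) \<le> 3 * m"
    by (intro degree_add_le) (auto intro: order.trans[OF degree_monom_le])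
  then show ?thesis using assms by simp
qed

lemma degree_Phi5: "m \<ge> 1 \<Longrightarrow> degree (Phi5 m) = 4 * m"
  unfolding Phi5_decomp
  by (subst degree_add_eq_right) (auto simp: degree_Phi5_rest degree_monom_eq)

lemma lead_Phi5: "m \<ge> 1 \<Longrightarrow> coeff (Phi5 m) (4 * m) = 1"
proof -
  assume m: "m \<ge> 1"
  have "coeff (1 + monom (1::int) m + monom 1 (2*m) + monom 1 (3*m)) (4*m) = 0"
    using degree_Phi5_rest[OF m] by (intro coeff_eq_0) simp
  then show ?thesis unfolding Phi5_decomp by simp
qed

lemma Phi5_nz: "m \<ge> 1 \<Longrightarrow> Phi5 m \<noteq> 0"
  using lead_Phi5 by force

lemma poly_Phi5_1: "poly (Phi5 m) 1 = 5"
  by (simp add: Phi5_def poly_monom)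

lemma eisenstein5:
  fixes P A B :: "int poly"
  assumes PAB: "P = A * B" and lead: "coeff P (degree P) = 1"
    and low: "\<forall>j<degree P. 5 dvd coeff P j" and c0: "coeff P 0 = 5"
  shows "degree A = 0 \<or> degree B = 0"
proof (rule ccontr)
  assume "\<not> (degree A = 0 \<or> degree B = 0)"
  then have dA: "degree A > 0" and dB: "degree B > 0" by auto
  then have A0: "A \<noteq> 0" and B0: "B \<noteq> 0" by auto
  have degP: "degree P = degree A + degree B" using PAB A0 B0 by (simp add: degree_mult_eq)
  have lAB: "lead_coeff A * lead_coeff B = 1" using lead PAB by (simp add: lead_coeff_mult)
  have lA: "\<not> (5::int) dvd lead_coeff A"
  proof
    assume "(5::int) dvd lead_coeff A"
    then have "(5::int) dvd lead_coeff A * lead_coeff B" by (rule dvd_mult2)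
    with lAB show False by simp
  qed
  have lB: "\<not> (5::int) dvd lead_coeff B"
  proof
    assume "(5::int) dvd lead_coeff B"
    then have "(5::int) dvd lead_coeff A * lead_coeff B" by (rule dvd_mult)
    with lAB show False by simp
  qed
  define r where "r = (LEAST j. \<not> (5::int) dvd coeff A j)"
  define s where "s = (LEAST j. \<not> (5::int) dvd coeff B j)"
  have r1: "\<not> 5 dvd coeff A r" unfolding r_def using lA by (rule LeastI)
  have r2: "r \<le> degree A" unfolding r_def using lA by (rule Least_le)
  have r3: "\<And>x. x < r \<Longrightarrow> 5 dvd coeff A x" unfolding r_def using not_less_Least by blast
  have s1: "\<not> 5 dvd coeff B s" unfolding s_def using lB by (rule LeastI)
  have s2: "s \<le> degree B" unfolding s_def using lB by (rule Least_le)
  have s3: "\<And>x. x < s \<Longrightarrow> 5 dvd coeff B x" unfolding s_def using not_less_Least by blast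
  have "coeff P (r + s) = (\<Sum>x\<le>r+s. coeff A x * coeff B (r + s - x))"
    by (simp add: PAB coeff_mult)
  also have "\<dots> = coeff A r * coeff B s + (\<Sum>x\<in>{..r+s} - {r}. coeff A x * coeff B (r + s - x))"
    using sum.remove[of "{..r+s}" r "\<lambda>x. coeff A x * coeff B (r + s - x)"] by simp
  finally have split: "coeff P (r + s) = coeff A r * coeff B s + (\<Sum>x\<in>{..r+s} - {r}. coeff A x * coeff B (r + s - x))" .
  have rest: "5 dvd (\<Sum>x\<in>{..r+s} - {r}. coeff A x * coeff B (r + s - x))"
  proof (rule dvd_sum)
    fix x assume x: "x \<in> {..r+s} - {r}"
    show "5 dvd coeff A x * coeff B (r + s - x)"
    proof (cases "x < r")
      case True then show ?thesis using r3 by simp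
    next
      case False then have "r + s - x < s" using x by auto
      then show ?thesis using s3 by simp
    qed
  qed
  have "\<not> 5 dvd coeff P (r + s)"
  proof
    assume "5 dvd coeff P (r + s)"
    have eq: "coeff A r * coeff B s = coeff P (r + s) - (\<Sum>x\<in>{..r+s} - {r}. coeff A x * coeff B (r + s - x))"
      using split by simp
    have "5 dvd coeff P (r + s) - (\<Sum>x\<in>{..r+s} - {r}. coeff A x * coeff B (r + s - x))"
      by (rule dvd_diff) fact+
    then have "5 dvd coeff A r * coeff B s" by (simp only: eq)
    with r1 s1 not5_mult show False by blast
  qed
  with low have rs: "r + s \<ge> degree P" by (meson not_le)
  have rA: "r = degree A" using rs degP r2 s2 by linarith
  have sB: "s = degree B" using rs degP r2 s2 by linarith
  have "5 dvd coeff A 0" using r3[of 0] dA rA by simp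
  moreover have "5 dvd coeff B 0" using s3[of 0] dB sB by simp
  ultimately have "5 * 5 dvd coeff A 0 * coeff B 0" by (rule mult_dvd_mono)
  then have "(5 * 5::int) dvd 5" using c0 PAB by (simp add: coeff_mult_0)
  then show False by simp
qed

section \<open>Galois property\<close>

lemma omega_pow_mult_m_ne1:
  assumes "i \<ge> 1" "\<not> 5 dvd k"
  shows "omega i ^ (k * 5 ^ (i - 1)) \<noteq> 1"
proof
  assume "omega i ^ (k * 5 ^ (i - 1)) = 1"
  then have "5 ^ i dvd k * 5 ^ (i - 1)" by (simp add: omega_pow_eq_1)
  moreover have "(5::nat) ^ i = 5 * 5 ^ (i - 1)" using assms(1)
    by (metis Suc_diff_1 less_le_trans power_Suc zero_less_one)
  ultimately have "5 * 5 ^ (i - 1) dvd k * 5 ^ (i - 1)" by simp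
  then have "5 dvd k" by (metis dvd_times_right_cancel_iff power_not_zero zero_neq_numeral)
  with assms(2) show False by simp
qed

lemma ev_Phi_root:
  assumes "i \<ge> 1" "\<not> 5 dvd k"
  shows "ev (Phi5 (5 ^ (i - 1))) (omega i ^ k) = 0"
proof -
  define m where "m = (5::nat) ^ (i - 1)"
  define y where "y = omega i ^ (k * m)"
  have n: "(5::nat) ^ i = 5 * m" using assms(1) unfolding m_def
    by (metis Suc_diff_1 less_le_trans power_Suc zero_less_one)
  have pw: "(omega i ^ k) ^ (a * m) = y ^ a" for a
    unfolding y_def by (simp add: power_mult[symmetric] mult.commute mult.left_commute)
  have "ev (Phi5 m) (omega i ^ k) = 1 + y + y^2 + y^3 + y^4"
    using pw[of 1] pw[of 2] pw[of 3] pw[of 4] by (simp add: ev_Phi5)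
  moreover have "y ^ 5 = 1"
  proof -
    have "y ^ 5 = omega i ^ (k * 5 ^ i)" unfolding y_def n by (simp add: power_mult[symmetric] ac_simps)
    also have "\<dots> = 1" by (simp add: omega_pow_eq_1)
    finally show ?thesis .
  qed
  moreover have "y \<noteq> 1" unfolding y_def m_def using omega_pow_mult_m_ne1[OF assms] .
  ultimately show ?thesis unfolding m_def[symmetric]
    using geo5[of y] by simp
qed

lemma TPhi_props:
  assumes "i \<ge> 1"
  defines "P \<equiv> Tsh (Phi5 (5 ^ (i - 1)))"
  shows "coeff P (degree P) = 1" "\<forall>j<degree P. 5 dvd coeff P j" "coeff P 0 = 5"
    "degree P = 4 * 5 ^ (i - 1)" "Jm 4 P"
proof -
  define m where "m = (5::nat) ^ (i - 1)"
  have m1: "m \<ge> 1" unfolding m_def by simp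
  have dP: "degree P = 4 * m" unfolding P_def m_def[symmetric] using degree_Phi5[OF m1] by simp
  then show "degree P = 4 * 5 ^ (i - 1)" by (simp add: m_def)
  have "lead_coeff P = lead_coeff (Phi5 m) * lead_coeff [:1, 1::int:] ^ degree (Phi5 m)"
    unfolding P_def m_def[symmetric] Tsh_def by (rule lead_coeff_comp) simp
  then show "coeff P (degree P) = 1" using lead_Phi5[OF m1] degree_Phi5[OF m1] by simp
  have F: "F5 (P - monom 1 (4 * m))" unfolding P_def m_def by (rule TPhi_F5) simp
  show low: "\<forall>j<degree P. 5 dvd coeff P j"
  proof (intro allI impI)
    fix j assume "j < degree P"
    then have "coeff (monom (1::int) (4 * m)) j = 0" using dP by simp
    with F show "5 dvd coeff P j" unfolding F5_def by (metis coeff_diff diff_zero)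
  qed
  show "coeff P 0 = 5" unfolding P_def by (simp add: coeff0_Tsh poly_Phi5_1)
  show "Jm 4 P" unfolding Jm_def using low dP m1 by auto
qed

lemma phi_dvd:
  assumes i: "i \<ge> 1" and G: "ev G (omega i) = 0"
  shows "Phi5 (5 ^ (i - 1)) dvd G"
proof -
  define \<Phi> where "\<Phi> = Phi5 (5 ^ (i - 1))"
  define w where "w = omega i"
  have \<Phi>0: "\<Phi> \<noteq> 0" unfolding \<Phi>_def by (rule Phi5_nz) simp
  have \<Phi>w: "ev \<Phi> w = 0" unfolding \<Phi>_def w_def using ev_Phi_root[OF i, of 1] by simp
  have "\<exists>g. g \<noteq> 0 \<and> ev g w = 0" using \<Phi>0 \<Phi>w by blast
  then obtain m0 where m0: "m0 \<noteq> 0 \<and> ev m0 w = 0"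
    and m0min: "\<And>g. g \<noteq> 0 \<and> ev g w = 0 \<Longrightarrow> degree m0 \<le> degree g"
    using ex_has_least_nat[of "\<lambda>g. g \<noteq> 0 \<and> ev g w = 0" _ degree] by metis
  define p where "p = primitive_part m0"
  have cm0: "Polynomial.content m0 \<noteq> 0" using m0 by simp
  have "ev m0 w = ev (smult (Polynomial.content m0) p) w"
    unfolding p_def content_times_primitive_part ..
  then have "ev m0 w = of_int (Polynomial.content m0) * ev p w" by simp
  with m0 have "complex_of_int (Polynomial.content m0) * ev p w = 0" by metis
  with cm0 have pw: "ev p w = 0" by simp
  have p0: "p \<noteq> 0" using m0 unfolding p_def by simp
  have dp: "degree p = degree m0" unfolding p_def by simp
  have cp: "Polynomial.content p = 1" unfolding p_def using m0 by (simp add: content_primitive_part)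
  have pdvd: "p dvd g" if gw: "ev g w = 0" for g
  proof -
    obtain q r where qr: "pseudo_divmod g p = (q, r)" by (cases "pseudo_divmod g p") auto
    define c where "c = coeff p (degree p) ^ (Suc (degree g) - degree p)"
    have c0: "c \<noteq> 0" unfolding c_def using p0 by simp
    have eq: "smult c g = p * q + r" unfolding c_def by (rule pseudo_divmod(1)[OF p0 qr])
    have rdeg: "r = 0 \<or> degree r < degree p" by (rule pseudo_divmod(2)[OF p0 qr])
    have "ev r w = 0"
    proof -
      have "ev (smult c g) w = ev (p * q + r) w" by (simp only: eq)
      then show ?thesis using gw pw by simp
    qed
    then have r0: "r = 0" using rdeg m0min[of r] dp by force
    have "primitive_part (smult c g) = primitive_part (p * q)" using eq r0 by simp
    then have e2: "smult (unit_factor c) (primitive_part g) = p * primitive_part q"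
      by (simp add: primitive_part_smult primitive_part_mult primitive_part_prim[OF cp])
    define u where "u = unit_factor c"
    have "is_unit u" unfolding u_def using c0 by (rule unit_factor_is_unit)
    then have "\<bar>u\<bar> = 1" by (simp only: zdvd1_eq)
    then have uu: "u * u = 1" by (metis abs_mult_self_eq mult_1)
    have "p dvd smult u (primitive_part g)" using e2 unfolding u_def by simp
    then have "p dvd smult (Polynomial.content g * u) (smult u (primitive_part g))" by (rule dvd_smult)
    also have "smult (Polynomial.content g * u) (smult u (primitive_part g)) = g"
      by (simp add: mult.assoc uu content_times_primitive_part)
    finally show ?thesis .
  qed
  have "p dvd \<Phi>" by (rule pdvd[OF \<Phi>w])
  then obtain q1 where q1: "\<Phi> = p * q1" by (elim dvdE)
  have TP: "Tsh \<Phi> = Tsh p * Tsh q1" using q1 by simp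
  have "degree (Tsh p) = 0 \<or> degree (Tsh q1) = 0"
    using TPhi_props[OF i] unfolding \<Phi>_def[symmetric]
    by (intro eisenstein5[OF TP]) simp_all
  then have "degree p = 0 \<or> degree q1 = 0" by simp
  moreover have "degree p \<noteq> 0"
  proof
    assume "degree p = 0"
    then have "p = [:coeff p 0:]" by (metis degree_0_id)
    then have "ev p w = of_int (coeff p 0)" by (metis ev_const)
    moreover have "coeff p 0 \<noteq> 0" using p0 \<open>p = [:coeff p 0:]\<close> by (metis pCons_0_0)
    ultimately show False using pw by simp
  qed
  ultimately have "degree q1 = 0" by simp
  then obtain c1 where c1: "q1 = [:c1:]" by (elim degree_eq_zeroE)
  have "\<Phi> = smult c1 p" using q1 c1 by simp
  then have "lead_coeff \<Phi> = c1 * lead_coeff p" by simp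
  moreover have "lead_coeff \<Phi> = 1" unfolding \<Phi>_def using lead_Phi5[of "5 ^ (i - 1)"] degree_Phi5[of "5 ^ (i - 1)"] by simp
  ultimately have "c1 dvd 1" by (metis dvd_triv_left)
  then have "\<bar>c1\<bar> = 1" by (simp only: zdvd1_eq)
  then have cc: "c1 * c1 = 1" by (metis abs_mult_self_eq mult_1)
  have "smult c1 \<Phi> = p" using \<open>\<Phi> = smult c1 p\<close> by (simp add: cc)
  then have "\<Phi> dvd p" by (metis dvd_smult dvd_refl)
  then show ?thesis using pdvd[OF G[folded w_def]] unfolding \<Phi>_def by (rule dvd_trans)
qed

lemma galois:
  assumes "i \<ge> 1" "ev G (omega i) = 0" "\<not> 5 dvd k"
  shows "ev G (omega i ^ k) = 0"
proof -
  obtain q where "G = Phi5 (5 ^ (i - 1)) * q" using phi_dvd[OF assms(1,2)] by (elim dvdE)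
  then show ?thesis using ev_Phi_root[OF assms(1,3)] by simp
qed

lemma vanish_Jm:
  assumes "i \<ge> 1" "ev G (omega i) = 0"
  shows "Jm 4 (Tsh G)"
proof -
  obtain q where "G = Phi5 (5 ^ (i - 1)) * q" using phi_dvd[OF assms(1,2)] by (elim dvdE)
  then show ?thesis using TPhi_props(5)[OF assms(1)] by (simp add: Jm_mult)
qed

section \<open>Norms and traces\<close>

definition Sset :: "nat \<Rightarrow> nat set" where
  "Sset i = {j. j < 5 ^ i \<and> \<not> (5::nat) dvd j}"

lemma five_pow_eq: "i \<ge> 1 \<Longrightarrow> (5::nat) ^ i = 5 * 5 ^ (i - 1)"
  by (metis Suc_diff_1 less_le_trans power_Suc zero_less_one)

lemma Sset_Nnorm: "i \<ge> 1 \<Longrightarrow> {j. 1 \<le> j \<and> j \<le> 5 ^ i \<and> \<not> (5::nat) dvd j} = Sset i"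
proof -
  assume i: "i \<ge> 1"
  then have "(5::nat) dvd 5 ^ i" by (simp add: five_pow_eq)
  show ?thesis
  proof (intro set_eqI iffI)
    fix x :: nat assume x: "x \<in> {j. 1 \<le> j \<and> j \<le> 5 ^ i \<and> \<not> (5::nat) dvd j}"
    then have "x \<noteq> 5 ^ i" using \<open>(5::nat) dvd 5 ^ i\<close> by auto
    with x show "x \<in> Sset i" unfolding Sset_def by auto
  next
    fix x :: nat assume x: "x \<in> Sset i"
    then have "x \<noteq> 0" unfolding Sset_def by (metis dvd_0_right mem_Collect_eq)
    with x show "x \<in> {j. 1 \<le> j \<and> j \<le> 5 ^ i \<and> \<not> (5::nat) dvd j}" unfolding Sset_def by auto
  qed
qed

lemma Nnorm_alt: "i \<ge> 1 \<Longrightarrow> Nnorm i F = (\<Prod>j\<in>Sset i. ev F (omega i ^ j))"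
  unfolding Nnorm_def by (simp only: Sset_Nnorm)

lemma finite_Sset [simp]: "finite (Sset i)"
  unfolding Sset_def by simp

lemma one_in_Sset: "i \<ge> 1 \<Longrightarrow> 1 \<in> Sset i"
proof -
  assume "i \<ge> 1"
  then have "1 < (5::nat) ^ i" by (intro one_less_power) simp_all
  then show ?thesis unfolding Sset_def by simp
qed

lemma Sset_alt: "i \<ge> 1 \<Longrightarrow> Sset i = {..<5 ^ i} - (\<lambda>l. 5 * l) ` {..<5 ^ (i - 1)}"
proof -
  assume i: "i \<ge> 1"
  show ?thesis
  proof (intro set_eqI iffI)
    fix j assume "j \<in> Sset i"
    then show "j \<in> {..<5 ^ i} - (\<lambda>l. 5 * l) ` {..<5 ^ (i - 1)}" unfolding Sset_def by auto
  next
    fix j :: nat assume j: "j \<in> {..<5 ^ i} - (\<lambda>l. 5 * l) ` {..<5 ^ (i - 1)}"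
    have "\<not> 5 dvd j"
    proof
      assume "5 dvd j"
      then obtain l where l: "j = 5 * l" by (elim dvdE)
      with j have "l < 5 ^ (i - 1)" using five_pow_eq[OF i] by auto
      with j l show False by auto
    qed
    with j show "j \<in> Sset i" unfolding Sset_def by auto
  qed
qed

lemma geo_int: "(y::complex) ^ N = 1 \<Longrightarrow> (\<Sum>k<N. y ^ k) \<in> \<int>"
proof (cases "y = 1")
  case True then show ?thesis by simp
next
  case False
  assume "y ^ N = 1"
  then show ?thesis using geometric_sum[OF False, of N] by simp
qed

lemma sum_Sset_int:
  assumes i: "i \<ge> 1" and y: "(y::complex) ^ (5 ^ i) = 1"
  shows "(\<Sum>k\<in>Sset i. y ^ k) \<in> \<int>"
proof -
  have sub: "(\<lambda>l. 5 * l) ` {..<5 ^ (i - 1)} \<subseteq> {..<(5::nat) ^ i}"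
    using five_pow_eq[OF i] by auto
  have "(\<Sum>k\<in>Sset i. y ^ k) = (\<Sum>k<5 ^ i. y ^ k) - (\<Sum>k\<in>(\<lambda>l. 5 * l) ` {..<5 ^ (i - 1)}. y ^ k)"
    unfolding Sset_alt[OF i] by (rule sum_diff[OF _ sub]) simp
  also have "(\<Sum>k\<in>(\<lambda>l. 5 * l) ` {..<5 ^ (i - 1)}. y ^ k) = (\<Sum>l<5 ^ (i - 1). (y ^ 5) ^ l)"
    by (subst sum.reindex) (auto simp: inj_on_def power_mult)
  finally have eq: "(\<Sum>k\<in>Sset i. y ^ k) = (\<Sum>k<5 ^ i. y ^ k) - (\<Sum>l<5 ^ (i - 1). (y ^ 5) ^ l)" .
  have "(y ^ 5) ^ (5 ^ (i - 1)) = 1" using y five_pow_eq[OF i] by (simp add: power_mult[symmetric])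
  then show ?thesis unfolding eq by (intro Ints_diff geo_int y)
qed

lemma trace_int:
  assumes i: "i \<ge> 1"
  shows "(\<Sum>k\<in>Sset i. ev P (omega i ^ k)) \<in> \<int>"
proof -
  have pc: "(omega i ^ k) ^ d = (omega i ^ d) ^ k" for k d
    by (metis power_mult mult.commute)
  have "(\<Sum>k\<in>Sset i. ev P (omega i ^ k)) = (\<Sum>k\<in>Sset i. \<Sum>d\<le>degree P. of_int (coeff P d) * (omega i ^ d) ^ k)"
    by (simp only: ev_altdef pc)
  also have "\<dots> = (\<Sum>d\<le>degree P. of_int (coeff P d) * (\<Sum>k\<in>Sset i. (omega i ^ d) ^ k))"
    by (subst sum.swap) (simp add: sum_distrib_left)
  also have "\<dots> \<in> \<int>"
  proof -
    have inner: "(\<Sum>k\<in>Sset i. (omega i ^ d) ^ k) \<in> \<int>" for d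
    proof -
      have "(omega i ^ d) ^ 5 ^ i = (omega i ^ 5 ^ i) ^ d" by (metis power_mult mult.commute)
      then show ?thesis by (intro sum_Sset_int[OF i]) simp
    qed
    show ?thesis by (intro Ints_sum Ints_mult Ints_of_int inner)
  qed
  finally show ?thesis .
qed

lemma mult_perm_Sset:
  assumes i: "i \<ge> 1" and k: "k \<in> Sset i"
  shows "inj_on (\<lambda>j. k * j mod 5 ^ i) (Sset i)" "(\<lambda>j. k * j mod 5 ^ i) ` Sset i = Sset i"
proof -
  have p5: "prime (5::nat)" by simp
  have k5: "\<not> 5 dvd k" using k unfolding Sset_def by simp
  have cop: "coprime k (5 ^ i)" by (rule prime_imp_power_coprime[OF p5 k5])
  show inj: "inj_on (\<lambda>j. k * j mod 5 ^ i) (Sset i)"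
  proof (rule inj_onI)
    fix a b assume a: "a \<in> Sset i" and b: "b \<in> Sset i" and eq: "k * a mod 5 ^ i = k * b mod 5 ^ i"
    have lt: "a < 5 ^ i" "b < 5 ^ i" using a b unfolding Sset_def by auto
    {
      fix a b :: nat assume ab: "a \<le> b" "a < 5 ^ i" "b < 5 ^ i" and eq: "k * a mod 5 ^ i = k * b mod 5 ^ i"
      have kab: "k * a \<le> k * b" using ab by simp
      have e2: "k * b mod 5 ^ i = k * a mod 5 ^ i" using eq by (rule sym)
      have "5 ^ i dvd k * b - k * a" by (rule iffD1[OF mod_eq_dvd_iff_nat[OF kab] e2])
      then have "5 ^ i dvd k * (b - a)" by (simp add: diff_mult_distrib2)
      moreover have "coprime (5 ^ i) k" using cop by (simp add: coprime_commute)
      ultimately have dv: "5 ^ i dvd b - a" by (simp add: coprime_dvd_mult_right_iff coprime_dvd_mult_left_iff)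
      have "b - a = 0"
      proof (rule ccontr)
        assume "b - a \<noteq> 0"
        then have "5 ^ i \<le> b - a" using dv by (intro dvd_imp_le) auto
        with ab show False by simp
      qed
      then have "a = b" using ab by simp
    }
    note * = this
    show "a = b"
    proof (cases "a \<le> b")
      case True show ?thesis using *[OF True lt eq] by simp
    next
      case False then have "b \<le> a" by simp
      then show ?thesis using *[OF _ lt(2) lt(1) eq[symmetric]] by simp
    qed
  qed
  have "(\<lambda>j. k * j mod 5 ^ i) ` Sset i \<subseteq> Sset i"
  proof
    fix x assume "x \<in> (\<lambda>j. k * j mod 5 ^ i) ` Sset i"
    then obtain j where j: "j \<in> Sset i" and x: "x = k * j mod 5 ^ i" by auto
    have j5: "\<not> 5 dvd j" using j unfolding Sset_def by simp
    have "x < 5 ^ i" unfolding x by simp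
    moreover have "\<not> 5 dvd x"
    proof
      assume "5 dvd x"
      moreover have "(5::nat) dvd 5 ^ i" using five_pow_eq[OF i] by simp
      ultimately have "5 dvd k * j" unfolding x by (simp add: dvd_mod_iff)
      with p5 k5 j5 show False by (simp add: prime_dvd_mult_iff)
    qed
    ultimately show "x \<in> Sset i" unfolding Sset_def by simp
  qed
  then show "(\<lambda>j. k * j mod 5 ^ i) ` Sset i = Sset i"
    by (intro endo_inj_surj inj) simp_all
qed

lemma rational_in_ring:
  assumes i: "i \<ge> 1" and N: "N > 0" and c: "of_nat N * ev P (omega i) = of_int c"
  shows "ev P (omega i) \<in> \<int>"
proof -
  define \<Phi> where "\<Phi> = Phi5 (5 ^ (i - 1))"
  have \<Phi>0: "\<Phi> \<noteq> 0" unfolding \<Phi>_def by (rule Phi5_nz) simp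
  have d\<Phi>: "degree \<Phi> = 4 * 5 ^ (i - 1)" unfolding \<Phi>_def by (rule degree_Phi5) simp
  have l\<Phi>: "coeff \<Phi> (degree \<Phi>) = 1" unfolding \<Phi>_def
    using lead_Phi5[of "5 ^ (i - 1)"] degree_Phi5[of "5 ^ (i - 1)"] by simp
  have \<Phi>w: "ev \<Phi> (omega i) = 0" unfolding \<Phi>_def using ev_Phi_root[OF i, of 1] by simp
  obtain q r where qr: "pseudo_divmod P \<Phi> = (q, r)" by (cases "pseudo_divmod P \<Phi>") auto
  have eq: "P = \<Phi> * q + r" using pseudo_divmod(1)[OF \<Phi>0 qr] l\<Phi> by simp
  have rdeg: "r = 0 \<or> degree r < degree \<Phi>" by (rule pseudo_divmod(2)[OF \<Phi>0 qr])
  have "ev P (omega i) = ev \<Phi> (omega i) * ev q (omega i) + ev r (omega i)"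
    by (subst eq) simp
  then have Pr: "ev P (omega i) = ev r (omega i)" using \<Phi>w by simp
  define G where "G = smult (int N) r - [:c:]"
  have "ev G (omega i) = 0" unfolding G_def using c Pr by simp
  then have "\<Phi> dvd G" unfolding \<Phi>_def by (rule phi_dvd[OF i])
  then obtain q' where q': "G = \<Phi> * q'" by (elim dvdE)
  have dG: "degree G < degree \<Phi>"
  proof -
    have "degree G \<le> max (degree (smult (int N) r)) (degree [:c:])"
      unfolding G_def by (rule degree_diff_le_max)
    also have "\<dots> \<le> degree r" by simp
    finally have "degree G \<le> degree r" .
    moreover have "degree r < degree \<Phi>" using rdeg d\<Phi> by auto
    ultimately show ?thesis by simp
  qed
  have "q' = 0"
  proof (rule ccontr)
    assume "q' \<noteq> 0"
    then have "degree G = degree \<Phi> + degree q'" using q' \<Phi>0 by (simp add: degree_mult_eq)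
    with dG show False by simp
  qed
  then have "smult (int N) r = [:c:]" using q' unfolding G_def by simp
  then have "degree (smult (int N) r) = 0" by simp
  then have dr: "degree r = 0" using N by simp
  have "ev r (omega i) = ev [:coeff r 0:] (omega i)" using degree_0_id[OF dr] by simp
  then have "ev r (omega i) = of_int (coeff r 0)" by simp
  then show ?thesis using Pr by simp
qed

lemma norm_int:
  assumes i: "i \<ge> 1"
  shows "Nnorm i F \<in> \<int>"
proof -
  define w where "w = omega i"
  define P where "P = (\<Prod>j\<in>Sset i. pcompose F (monom 1 j))"
  have evP: "ev P z = (\<Prod>j\<in>Sset i. ev F (z ^ j))" for z
    unfolding P_def by (simp add: ev_prod)
  have inv: "ev P (w ^ k) = ev P w" if k: "k \<in> Sset i" for k
  proof -
    have "ev P (w ^ k) = (\<Prod>j\<in>Sset i. ev F (w ^ (k * j mod 5 ^ i)))"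
      unfolding evP w_def by (simp add: power_mult[symmetric] omega_pow_mod)
    also have "\<dots> = (\<Prod>j\<in>(\<lambda>j. k * j mod 5 ^ i) ` Sset i. ev F (w ^ j))"
      by (rule prod.reindex[symmetric, unfolded comp_def]) (rule mult_perm_Sset(1)[OF i k])
    also have "\<dots> = ev P w" unfolding mult_perm_Sset(2)[OF i k] evP by simp
    finally show ?thesis .
  qed
  have "(\<Sum>k\<in>Sset i. ev P (w ^ k)) = of_nat (card (Sset i)) * ev P w"
    using inv by simp
  moreover have "(\<Sum>k\<in>Sset i. ev P (w ^ k)) \<in> \<int>" unfolding w_def by (rule trace_int[OF i])
  ultimately have "of_nat (card (Sset i)) * ev P w \<in> \<int>" by simp
  then obtain c where c: "of_nat (card (Sset i)) * ev P w = of_int c" by (elim Ints_cases)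
  have "card (Sset i) > 0" using one_in_Sset[OF i] by (auto simp: card_gt_0_iff)
  then have "ev P w \<in> \<int>" unfolding w_def by (rule rational_in_ring[OF i _ c[unfolded w_def]])
  moreover have "Nnorm i F = ev P w" unfolding Nnorm_alt[OF i] evP w_def by simp
  ultimately show ?thesis by simp
qed

lemma hyp5:
  assumes i: "i \<ge> 1" and f5: "(5::int) dvd poly f 1"
  shows "\<exists>k::int. Nnorm i f = 5 * of_int k"
proof -
  define X where "X = [:-1, 1::int:]"
  define w where "w = omega i"
  define \<Phi> where "\<Phi> = Phi5 (5 ^ (i - 1))"
  define g where "g = synthetic_div f 1"
  define g\<Phi> where "g\<Phi> = synthetic_div \<Phi> 1"
  have fd: "f = X * g + [:poly f 1:]" unfolding X_def g_def using synthetic_div_correct'[of 1 f] by simp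
  have \<Phi>d: "\<Phi> = X * g\<Phi> + [:5:]" unfolding X_def g\<Phi>_def
    using synthetic_div_correct'[of 1 \<Phi>] by (simp add: \<Phi>_def poly_Phi5_1)
  obtain c0 where c0: "poly f 1 = 5 * c0" using f5 by (elim dvdE)
  define F where "F = g - smult c0 g\<Phi>"
  have fac: "ev f (w ^ j) = ev X (w ^ j) * ev F (w ^ j)" if j: "j \<in> Sset i" for j
  proof -
    define z where "z = w ^ j"
    have "\<not> 5 dvd j" using j unfolding Sset_def by simp
    then have "ev \<Phi> z = 0" unfolding z_def w_def \<Phi>_def by (rule ev_Phi_root[OF i])
    moreover have "ev \<Phi> z = ev X z * ev g\<Phi> z + 5" by (subst \<Phi>d) simp
    ultimately have "ev X z * ev g\<Phi> z + 5 = 0" by simp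
    then have h: "ev X z * ev g\<Phi> z = -5" by (simp add: eq_neg_iff_add_eq_0)
    have "ev f z = ev X z * ev g z + 5 * of_int c0" by (subst fd) (simp add: c0)
    also have "\<dots> = ev X z * ev g z - of_int c0 * (ev X z * ev g\<Phi> z)" using h by simp
    also have "\<dots> = ev X z * ev F z" unfolding F_def by (simp add: algebra_simps)
    finally show ?thesis unfolding z_def .
  qed
  have "Nnorm i f = (\<Prod>j\<in>Sset i. ev X (w ^ j) * ev F (w ^ j))"
    unfolding Nnorm_alt[OF i] w_def[symmetric] using fac by (intro prod.cong) auto
  also have "\<dots> = Nnorm i X * Nnorm i F"
    unfolding Nnorm_alt[OF i] w_def[symmetric] by (rule prod.distrib)
  finally have Nf: "Nnorm i f = Nnorm i X * Nnorm i F" .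
  obtain a where a: "Nnorm i X = of_int a" using norm_int[OF i, of X] by (elim Ints_cases)
  obtain b where b: "Nnorm i F = of_int b" using norm_int[OF i, of F] by (elim Ints_cases)
  define Y where "Y = (\<Prod>j\<in>Sset i - {1}. pcompose X (monom 1 j))"
  have "Nnorm i X = ev X (w ^ 1) * (\<Prod>j\<in>Sset i - {1}. ev X (w ^ j))"
    unfolding Nnorm_alt[OF i] w_def[symmetric] using one_in_Sset[OF i] by (intro prod.remove) simp_all
  also have "\<dots> = ev (X * Y) w" unfolding Y_def by (simp add: ev_prod)
  finally have "ev (X * Y - [:a:]) w = 0" using a by simp
  then have "Jm 4 (Tsh (X * Y - [:a:]))" unfolding w_def by (rule vanish_Jm[OF i])
  then have "5 dvd coeff (Tsh (X * Y - [:a:])) 0" unfolding Jm_def by (metis zero_less_numeral)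
  then have "5 dvd - a" unfolding coeff0_Tsh by (simp add: X_def)
  then have "5 dvd a" by simp
  then obtain a' where "a = 5 * a'" by (elim dvdE)
  then have "Nnorm i f = 5 * of_int (a' * b)" using Nf a b by simp
  then show ?thesis by blast
qed

section \<open>Units\<close>

definition unitp :: "nat \<Rightarrow> complex \<Rightarrow> bool" where
  "unitp i u \<longleftrightarrow> (\<exists>U V. u = ev U (omega i) \<and> u * ev V (omega i) = 1)"

lemma unitp_Zomega_unit: "unitp i u \<Longrightarrow> Zomega_unit i u"
  unfolding unitp_def Zomega_unit_def Zomega_def by blast

lemma Zomega_unit_unitp: "Zomega_unit i u \<Longrightarrow> unitp i u"
  unfolding unitp_def Zomega_unit_def Zomega_def by blast

lemma unitp_mult: "unitp i a \<Longrightarrow> unitp i b \<Longrightarrow> unitp i (a * b)"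
  unfolding unitp_def
proof (elim exE conjE)
  fix A B VA VB
  assume "a = ev A (omega i)" "a * ev VA (omega i) = 1" "b = ev B (omega i)" "b * ev VB (omega i) = 1"
  then show "\<exists>U V. a * b = ev U (omega i) \<and> a * b * ev V (omega i) = 1"
    by (intro exI[of _ "A * B"] exI[of _ "VA * VB"]) (simp add: algebra_simps)
qed

lemma unitp_power: "unitp i a \<Longrightarrow> unitp i (a ^ k)"
proof (induction k)
  case 0 then show ?case unfolding unitp_def by (intro exI[of _ 1]) simp
next
  case (Suc k) then show ?case by (simp add: unitp_mult)
qed

lemma unitp_sign: "s \<in> {1, -1} \<Longrightarrow> unitp i (of_int s)"
  unfolding unitp_def by (intro exI[of _ "[:s:]"]) auto

lemma unitp_omega: "unitp i (omega i)"
  unfolding unitp_def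
proof (intro exI conjI)
  show "omega i = ev (monom 1 1) (omega i)" by simp
  have "omega i * omega i ^ (5 ^ i - 1) = omega i ^ (5 ^ i)"
    by (metis One_nat_def Suc_pred power_Suc zero_less_numeral zero_less_power)
  then show "omega i * ev (monom 1 (5 ^ i - 1)) (omega i) = 1" by simp
qed

lemma sum_even_pow: "(1 + z) * (\<Sum>l<N. z ^ (2 * l)) = (\<Sum>j<2 * N. (z::complex) ^ j)"
  by (induction N) (simp_all add: algebra_simps)

lemma inv_one_plus:
  assumes "(z::complex) ^ (5 ^ i) = 1" "z \<noteq> 1"
  shows "(1 + z) * (\<Sum>l<(5 ^ i + 1) div 2. z ^ (2 * l)) = 1"
proof -
  have odd: "2 * ((5 ^ i + 1) div 2) = 5 ^ i + (1::nat)" by simp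
  have "(\<Sum>j<5 ^ i. z ^ j) = (z ^ (5 ^ i) - 1) / (z - 1)" by (rule geometric_sum[OF assms(2)])
  also have "\<dots> = 0" using assms(1) by simp
  finally have s0: "(\<Sum>j<5 ^ i. z ^ j) = 0" .
  have "(\<Sum>j<Suc (5 ^ i). z ^ j) = (\<Sum>j<5 ^ i. z ^ j) + z ^ (5 ^ i)" by (rule sum.lessThan_Suc)
  then have "(\<Sum>j<5 ^ i + 1. z ^ j) = 1" using s0 assms(1) by simp
  then show ?thesis unfolding sum_even_pow odd .
qed

lemma omega_pow_ne1: "0 < k \<Longrightarrow> k < 5 ^ i \<Longrightarrow> omega i ^ k \<noteq> 1"
  by (auto simp: omega_pow_eq_1 dest: dvd_imp_le)

lemma unitp_one_plus:
  assumes "0 < k" "k < 5 ^ i"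
  shows "unitp i (1 + omega i ^ k)"
  unfolding unitp_def
proof (intro exI conjI)
  show "1 + omega i ^ k = ev (1 + monom 1 k) (omega i)" by simp
  have z: "(omega i ^ k) ^ (5 ^ i) = 1" by (metis omega_pow_n power_mult mult.commute power_one)
  define N where "N = (5 ^ i + 1) div (2::nat)"
  have "ev (\<Sum>l<N. monom 1 (k * (2 * l))) (omega i) = (\<Sum>l<N. (omega i ^ k) ^ (2 * l))"
    by (simp only: ev_sum ev_monom of_int_1 mult_1_left power_mult)
  then show "(1 + omega i ^ k) * ev (\<Sum>l<(5 ^ i + 1) div 2. monom 1 (k * (2 * l))) (omega i) = 1"
    using inv_one_plus[OF z omega_pow_ne1[OF assms]] unfolding N_def by simp
qed

lemma i_ge1_pow: "i \<ge> 1 \<Longrightarrow> (5::nat) \<le> 5 ^ i"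
  by (metis One_nat_def power_increasing power_one_right zero_less_numeral Suc_le_eq less_one le_refl
      numeral_le_iff semiring_norm(68) power_one_right)

lemma unitp_generators:
  assumes i: "i \<ge> 1"
  shows "unitp i (1 + omega i)" "unitp i (omega i ^ 4 + omega i)"
proof -
  have n5: "(5::nat) \<le> 5 ^ i" using i by (simp add: five_pow_eq)
  show "unitp i (1 + omega i)" using unitp_one_plus[of 1 i] n5 by simp
  have "omega i ^ 4 + omega i = omega i * (1 + omega i ^ 3)" by (simp add: algebra_simps eval_nat_numeral)
  moreover have "unitp i (1 + omega i ^ 3)" using unitp_one_plus[of 3 i] n5 by simp
  ultimately show "unitp i (omega i ^ 4 + omega i)" using unitp_omega unitp_mult by metis
qed

lemma five_lambda:
  assumes i: "i \<ge> 1"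
  shows "\<exists>E. 5 = (omega i - 1) ^ 3 * ev E (omega i)"
proof -
  define m where "m = (5::nat) ^ (i - 1)"
  define z where "z = omega i ^ m"
  define w where "w = omega i"
  have n: "(5::nat) ^ i = 5 * m" unfolding m_def by (rule five_pow_eq[OF i])
  have z5: "z ^ 5 = 1" unfolding z_def using n by (metis omega_pow_n power_mult mult.commute)
  have z1: "z \<noteq> 1" unfolding z_def m_def using omega_pow_mult_m_ne1[OF i, of 1] by simp
  have "(1 + z + z^2 + z^3 + z^4) * (z - 1) = 0" using geo5[of z] z5 by simp
  then have zs: "1 + z + z^2 + z^3 + z^4 = 0" using z1 by simp
  have "(1 - z) * (1 - z^2) * (1 - z^3) * (1 - z^4) = 5" using z5 zs by algebra
  then have prod5: "(1 - z^1) * (1 - z^2) * (1 - z^3) * (1 - z^4) = 5" by simp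
  define Pj where "Pj j = (\<Sum>l<j * m. monom (1::int) l)" for j
  have e: "1 - z ^ j = (1 - w) * ev (Pj j) w" for j
  proof -
    have "z ^ j = w ^ (j * m)" unfolding z_def w_def by (simp add: power_mult[symmetric] mult.commute)
    then show ?thesis unfolding Pj_def by (simp add: ev_sum one_diff_power_eq)
  qed
  have "5 = ((1 - w) * ev (Pj 1) w) * ((1 - w) * ev (Pj 2) w) * ((1 - w) * ev (Pj 3) w) * ((1 - w) * ev (Pj 4) w)"
    using prod5 unfolding e by simp
  also have "\<dots> = (w - 1) ^ 3 * ((w - 1) * (ev (Pj 1) w * ev (Pj 2) w * ev (Pj 3) w * ev (Pj 4) w))"
    by algebra
  also have "\<dots> = (w - 1) ^ 3 * ev ([:-1, 1:] * (Pj 1 * Pj 2 * Pj 3 * Pj 4)) w"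
    by (simp only: ev_mult ev_pCons ev_0) simp
  finally show ?thesis unfolding w_def by blast
qed

section \<open>Criterion for congruence modulo lambda cubed\<close>

lemma poly_split3: "(T::int poly) = poly_cutoff 3 T + monom 1 3 * poly_shift 3 T"
  by (rule poly_eqI) (simp add: coeff_poly_cutoff coeff_poly_shift coeff_monom_mult)

lemma crit3:
  assumes i: "i \<ge> 1" and J: "Jm 3 (Tsh (Q - 1))"
  shows "\<exists>h. ev Q (omega i) = 1 + (omega i - 1) ^ 3 * ev h (omega i)"
proof -
  define w where "w = omega i"
  define T where "T = Tsh (Q - 1)"
  define C where "C = map_poly (\<lambda>a. a div 5) (poly_cutoff 3 T)"
  define S where "S = poly_shift 3 T"
  obtain E where E: "5 = (w - 1) ^ 3 * ev E w" using five_lambda[OF i] unfolding w_def by blast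
  have bk: "ev (Q - 1) w = ev T (w - 1)"
  proof -
    have "pcompose T [:-1, 1:] = Q - 1" unfolding T_def Tsh_def
      by (simp add: pcompose_assoc[symmetric] pcompose_pCons)
    then have "ev (Q - 1) w = ev (pcompose T [:-1, 1:]) w" by simp
    then show ?thesis by simp
  qed
  have cut: "poly_cutoff 3 T = smult 5 C"
  proof (rule poly_eqI)
    fix j
    show "coeff (poly_cutoff 3 T) j = coeff (smult 5 C) j"
    proof (cases "j < 3")
      case True
      then have "5 dvd coeff T j" using J unfolding T_def Jm_def by simp
      then show ?thesis using True unfolding C_def by (simp add: coeff_map_poly coeff_poly_cutoff)
    next
      case False then show ?thesis unfolding C_def by (simp add: coeff_map_poly coeff_poly_cutoff)
    qed
  qed
  have "ev T (w - 1) = 5 * ev C (w - 1) + (w - 1) ^ 3 * ev S (w - 1)"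
    by (subst poly_split3) (simp add: cut S_def)
  also have "\<dots> = (w - 1) ^ 3 * ev (E * pcompose C [:-1, 1:] + pcompose S [:-1, 1:]) w"
    by (subst E) (simp add: algebra_simps)
  finally have "ev Q w - 1 = (w - 1) ^ 3 * ev (E * pcompose C [:-1, 1:] + pcompose S [:-1, 1:]) w"
    using bk by simp
  then show ?thesis unfolding w_def by (metis diff_eq_eq add.commute)
qed

lemma cm1: "coeff (A * B) 1 = coeff A 0 * coeff B 1 + coeff A 1 * coeff B (0::nat)"
  by (simp add: coeff_mult)

lemma cm2: "coeff (A * B) 2 = coeff A 0 * coeff B 2 + coeff A 1 * coeff B 1 + coeff A 2 * coeff B (0::nat)"
  by (simp add: coeff_mult numeral_2_eq_2)

lemma cm3: "coeff (A * B) 3 = coeff A 0 * coeff B 3 + coeff A 1 * coeff B 2 + coeff A 2 * coeff B 1 + coeff A 3 * coeff B (0::nat)"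
  by (simp add: coeff_mult numeral_3_eq_3 numeral_2_eq_2)

lemma Jm3_iff: "Jm 3 A \<longleftrightarrow> 5 dvd coeff A 0 \<and> 5 dvd coeff A 1 \<and> 5 dvd coeff A 2"
  unfolding Jm_def by (auto simp: numeral_3_eq_3 numeral_2_eq_2 less_Suc_eq)

lemma Jm4_iff: "Jm 4 A \<longleftrightarrow> 5 dvd coeff A 0 \<and> 5 dvd coeff A 1 \<and> 5 dvd coeff A 2 \<and> 5 dvd coeff A 3"
  unfolding Jm_def by (auto simp: eval_nat_numeral less_Suc_eq)

lemma pow11: "coeff ([:1, 1::int:] ^ I) 0 = 1 \<and> coeff ([:1, 1::int:] ^ I) 1 = int I"
  by (induction I) (simp_all add: cm1 coeff_0_power)

lemma pow101: "Jm 3 ([:1, 0, 1::int:] ^ K - [:1, 0, int K:])"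
proof (induction K)
  case 0 then show ?case by (simp add: Jm_def one_pCons)
next
  case (Suc K)
  have "Jm 3 ([:1, 0, 1::int:] * [:1, 0, 1:] ^ K - [:1, 0, 1:] * [:1, 0, int K:])"
    by (rule Jm_cong_mult[OF _ Suc]) simp
  moreover have "Jm 3 ([:1, 0, 1::int:] * [:1, 0, int K:] - [:1, 0, int (Suc K):])"
    unfolding Jm3_iff by (simp add: cm1 cm2 numeral_2_eq_2)
  ultimately show ?case by (simp add: Jm_trans)
qed

lemma Tsh_w4: "Tsh (monom 1 4 + monom 1 1) = [:2, 5, 6, 4, 1:]"
  unfolding Tsh_def by (simp add: monom_altdef eval_nat_numeral pcompose_pCons algebra_simps)

lemma Wq_cong: "Jm 3 (Tsh (monom 1 4 + monom 1 1) ^ 2 - [:-1, 0, -1:])"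
  unfolding Tsh_w4 Jm3_iff power2_eq_square by (simp add: cm1 cm2 numeral_2_eq_2)

lemma WqK_cong: "Jm 3 (Tsh (monom 1 4 + monom 1 1) ^ (2 * K) - smult ((-1) ^ K) [:1, 0, int K:])"
proof -
  have F1: "Jm 3 ((Tsh (monom 1 4 + monom 1 1) ^ 2) ^ K - [:-1, 0, -1:] ^ K)"
    by (rule Jm_power[OF Wq_cong])
  have E: "[:-1, 0, -1::int:] ^ K = smult ((-1) ^ K) ([:1, 0, 1:] ^ K)"
  proof -
    have "[:-1, 0, -1::int:] = smult (-1) [:1, 0, 1:]" by simp
    then show ?thesis by (simp only: smult_power)
  qed
  have F2: "Jm 3 (smult ((-1) ^ K) ([:1, 0, 1::int:] ^ K) - smult ((-1) ^ K) [:1, 0, int K:])"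
    unfolding smult_diff_right[symmetric] by (rule Jm_smult[OF pow101])
  have "Jm 3 ((Tsh (monom 1 4 + monom 1 1) ^ 2) ^ K - smult ((-1) ^ K) ([:1, 0, 1:] ^ K))"
    using F1 unfolding E .
  from Jm_trans[OF this F2] show ?thesis unfolding power_mult .
qed

lemma Tsh_11: "Tsh [:1, 1:] = [:2, 1:]"
  by (simp add: Tsh_def pcompose_pCons)

lemma rearr: fixes A B R T :: "int poly" assumes "c * s = s0"
  shows "[:s:] * A * B * smult c R * T = R * (A * ([:s0:] * B * T))"
proof -
  have "[:s:] * A * B * smult c R * T = smult (c * s) (A * B * R * T)"
    by (simp add: mult_smult_left mult_smult_right)
  also have "\<dots> = smult s0 (R * (A * (B * T)))" using assms by (simp add: ac_simps)
  also have "\<dots> = R * (A * ([:s0:] * B * T))" by (simp add: mult_smult_left mult_smult_right)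
  finally show ?thesis .
qed

lemma choose_sIJK:
  assumes a0: "\<not> 5 dvd poly f 1"
  shows "\<exists>s I J K. s \<in> {1, -1} \<and> J \<in> {0, 1} \<and> I \<le> 4 \<and> K \<le> 4 \<and>
    Jm 3 (Tsh ([:s:] * monom 1 I * [:1, 1:] ^ J * (monom 1 4 + monom 1 1) ^ (2 * K) * f - 1))"
proof -
  define Tf where "Tf = Tsh f"
  have Tf0: "coeff Tf 0 = poly f 1" unfolding Tf_def by (rule coeff0_Tsh)
  obtain s0 J where s0: "s0 \<in> {1, -1::int}" and J: "J \<in> {0, 1::nat}" and c0: "5 dvd s0 * 2 ^ J * poly f 1 - 1"
  proof -
    define a where "a = poly f 1"
    have "a mod 5 = 1 \<or> a mod 5 = 2 \<or> a mod 5 = 3 \<or> a mod 5 = 4" using a0 unfolding a_def by presburger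
    then show ?thesis
    proof (elim disjE)
      assume "a mod 5 = 1" then have "5 dvd 1 * 2 ^ 0 * a - 1" by (simp only: power_0 power_one_right mult_1 mult_1_left) presburger
      then show ?thesis using that[of 1 0] unfolding a_def by simp
    next
      assume "a mod 5 = 2" then have "5 dvd (-1) * 2 ^ 1 * a - 1" by (simp only: power_0 power_one_right mult_1 mult_1_left) presburger
      then show ?thesis using that[of "-1" 1] unfolding a_def by simp
    next
      assume "a mod 5 = 3" then have "5 dvd 1 * 2 ^ 1 * a - 1" by (simp only: power_0 power_one_right mult_1 mult_1_left) presburger
      then show ?thesis using that[of 1 1] unfolding a_def by simp
    next
      assume "a mod 5 = 4" then have "5 dvd (-1) * 2 ^ 0 * a - 1" by (simp only: power_0 power_one_right mult_1 mult_1_left) presburger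
      then show ?thesis using that[of "-1" 0] unfolding a_def by simp
    qed
  qed
  define G1 where "G1 = [:s0:] * [:2, 1:] ^ J * Tf"
  have g10: "coeff G1 0 = s0 * 2 ^ J * poly f 1" unfolding G1_def coeff_mult_0 coeff_0_power Tf0 by simp
  define I where "I = nat ((- coeff G1 1) mod 5)"
  have I4: "I \<le> 4" unfolding I_def by simp
  have Iint: "int I = (- coeff G1 1) mod 5" unfolding I_def by simp
  define G2 where "G2 = [:1, 1:] ^ I * G1"
  have g20: "5 dvd coeff G2 0 - 1" unfolding G2_def coeff_mult_0 using c0 g10 pow11[of I] by simp
  have g21: "5 dvd coeff G2 1"
  proof -
    have "coeff G2 1 = coeff G1 1 + int I * coeff G1 0" unfolding G2_def cm1 using pow11[of I] by simp
    also have "\<dots> = int I * (coeff G1 0 - 1) + (int I + coeff G1 1)" by (simp add: algebra_simps)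
    finally have eq: "coeff G2 1 = int I * (coeff G1 0 - 1) + (int I + coeff G1 1)" .
    have d1: "5 dvd int I + coeff G1 1" unfolding Iint by presburger
    have d2: "5 dvd coeff G1 0 - 1" using c0 g10 by simp
    show ?thesis unfolding eq by (intro dvd_add dvd_mult d1 d2)
  qed
  define K where "K = nat ((- coeff G2 2) mod 5)"
  have K4: "K \<le> 4" unfolding K_def by simp
  have Kint: "int K = (- coeff G2 2) mod 5" unfolding K_def by simp
  define G3 where "G3 = [:1, 0, int K:] * G2"
  have G3: "Jm 3 (G3 - 1)"
  proof -
    have eq: "coeff G3 2 = int K * (coeff G2 0 - 1) + (int K + coeff G2 2)" unfolding G3_def cm2 by (simp add: algebra_simps numeral_2_eq_2)
    have d1: "5 dvd int K + coeff G2 2" unfolding Kint by presburger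
    have "5 dvd coeff G3 2" unfolding eq by (intro dvd_add dvd_mult d1 g20)
    moreover have "coeff G3 0 = coeff G2 0" unfolding G3_def coeff_mult_0 by simp
    moreover have "coeff G3 1 = coeff G2 1" unfolding G3_def cm1 by simp
    ultimately show ?thesis using g20 g21 unfolding Jm3_iff by simp
  qed
  define s where "s = s0 * (-1) ^ K"
  have s: "s \<in> {1, -1}" using s0 unfolding s_def by (auto simp: minus_one_power_iff)
  define P where "P = [:s:] * [:1, 1:] ^ I * [:2, 1:] ^ J"
  have TU: "Tsh ([:s:] * monom 1 I * [:1, 1:] ^ J * (monom 1 4 + monom 1 1) ^ (2 * K) * f)
      = P * Tsh (monom 1 4 + monom 1 1) ^ (2 * K) * Tf"
    unfolding P_def Tf_def by (simp only: Tsh_mult Tsh_power Tsh_monom Tsh_11 Tsh_const)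
  have A: "Jm 3 (P * Tsh (monom 1 4 + monom 1 1) ^ (2 * K) * Tf - P * smult ((-1) ^ K) [:1, 0, int K:] * Tf)"
    by (intro Jm_cong_mult WqK_cong) simp_all
  have B: "P * smult ((-1) ^ K) [:1, 0, int K:] * Tf = G3"
  proof -
    define c where "c = (-1::int) ^ K"
    define R where "R = [:1, 0, int K:]"
    define X where "X = [:1, 1::int:] ^ I * [:2, 1:] ^ J"
    have cc: "c * c = 1" unfolding c_def by (simp add: power_mult_distrib[symmetric])
    have "c * (s0 * c) = s0 * (c * c)" by (simp only: ac_simps)
    then have cs: "c * (s0 * c) = s0" using cc by simp
    show ?thesis unfolding P_def G3_def G2_def G1_def s_def R_def[symmetric] c_def[symmetric]
      by (rule rearr) (simp add: cs)
  qed
  have "Jm 3 (P * Tsh (monom 1 4 + monom 1 1) ^ (2 * K) * Tf - G3)" using A unfolding B .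
  from Jm_trans[OF this G3]
  have "Jm 3 (Tsh ([:s:] * monom 1 I * [:1, 1:] ^ J * (monom 1 4 + monom 1 1) ^ (2 * K) * f - 1))"
    unfolding Tsh_diff Tsh_1 TU .
  then show ?thesis using s J I4 K4
    by (intro exI[of _ s] exI[of _ I] exI[of _ J] exI[of _ K] conjI) assumption+
qed

section \<open>Congruence modulo (5, lambda^4)\<close>

definition cg4 :: "int poly \<Rightarrow> int poly \<Rightarrow> bool" where
  "cg4 A B \<longleftrightarrow> Jm 4 (Tsh A - Tsh B)"

lemma cg4_refl [simp]: "cg4 A A" by (simp add: cg4_def)
lemma cg4_sym: "cg4 A B \<Longrightarrow> cg4 B A" unfolding cg4_def by (rule Jm_sym)
lemma cg4_trans: "cg4 A B \<Longrightarrow> cg4 B C \<Longrightarrow> cg4 A C" unfolding cg4_def by (rule Jm_trans)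
lemma cg4_mult: "cg4 A B \<Longrightarrow> cg4 C D \<Longrightarrow> cg4 (A * C) (B * D)"
  unfolding cg4_def by (simp add: Jm_cong_mult)
lemma cg4_add: "cg4 A B \<Longrightarrow> cg4 C D \<Longrightarrow> cg4 (A + C) (B + D)"
proof -
  assume "cg4 A B" "cg4 C D"
  then have "Jm 4 ((Tsh A - Tsh B) + (Tsh C - Tsh D))" unfolding cg4_def by (rule Jm_add)
  then show ?thesis unfolding cg4_def by (simp add: algebra_simps)
qed
lemma cg4_uminus: "cg4 A B \<Longrightarrow> cg4 (- A) (- B)"
proof -
  assume "cg4 A B"
  then have "Jm 4 (- (Tsh A - Tsh B))" unfolding cg4_def by (rule Jm_uminus)
  moreover have "Tsh (- A) = - Tsh A" "Tsh (- B) = - Tsh B" unfolding Tsh_def by (simp_all add: pcompose_uminus)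
  ultimately show ?thesis unfolding cg4_def by (simp add: algebra_simps)
qed
lemma cg4_diff: "cg4 A B \<Longrightarrow> cg4 C D \<Longrightarrow> cg4 (A - C) (B - D)"
  using cg4_add[of A B "- C" "- D"] cg4_uminus[of C D] by simp
lemma cg4_power: "cg4 A B \<Longrightarrow> cg4 (A ^ e) (B ^ e)"
  unfolding cg4_def by (simp add: Jm_power)
lemma cg4_smult: "cg4 A B \<Longrightarrow> cg4 (smult a A) (smult a B)"
proof -
  assume "cg4 A B"
  then have "Jm 4 (smult a (Tsh A - Tsh B))" unfolding cg4_def by (rule Jm_smult)
  then show ?thesis unfolding cg4_def by (simp add: smult_diff_right)
qed

lemma cg4_vanish:
  assumes "i \<ge> 1" "ev (A - B) (omega i) = 0"
  shows "cg4 A B"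
  unfolding cg4_def using vanish_Jm[OF assms] by simp

lemma Jm_pcompose: "Jm k A \<Longrightarrow> coeff H 0 = 0 \<Longrightarrow> Jm k (pcompose A H)"
proof (induction A arbitrary: k rule: pCons_induct)
  case 0 then show ?case by simp
next
  case (pCons a A)
  show ?case
  proof (cases k)
    case 0 then show ?thesis by (simp add: Jm_def)
  next
    case (Suc k')
    have a5: "5 dvd a" using pCons.prems(1) Suc unfolding Jm_def by (metis coeff_pCons_0 zero_less_Suc)
    have "Jm k' A" using pCons.prems(1) Suc unfolding Jm_def by (metis Suc_less_eq coeff_pCons_Suc)
    then have IH: "Jm k' (pcompose A H)" using pCons.IH pCons.prems(2) by blast
    obtain a' H' where aH: "H = pCons a' H'" by (rule pCons_cases)
    with pCons.prems(2) have "a' = 0" by simp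
    with aH have H': "H = pCons 0 H'" by simp
    have "H * pcompose A H = pCons 0 (H' * pcompose A H)" unfolding H' by simp
    moreover have "Jm k' (H' * pcompose A H)" using IH by (rule Jm_mult2)
    ultimately have "Jm k (H * pcompose A H)" using Suc unfolding Jm_def
      by (auto simp: less_Suc_eq_0_disj)
    moreover have "Jm k [:a:]" using a5 unfolding Jm_def by (simp add: coeff_pCons split: nat.split)
    ultimately show ?thesis by (simp add: pcompose_pCons Jm_add)
  qed
qed

lemma Tsh_pcompose: "Tsh (pcompose D G) = pcompose (Tsh D) (Tsh G - 1)"
proof -
  have "pcompose [:1, 1:] (Tsh G - 1) = Tsh G" by (simp add: pcompose_pCons algebra_simps)
  then have "pcompose (Tsh D) (Tsh G - 1) = pcompose D (Tsh G)"
    unfolding Tsh_def by (simp add: pcompose_assoc[symmetric])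
  then show ?thesis unfolding Tsh_def by (simp add: pcompose_assoc)
qed

lemma cg4_pcompose:
  assumes "cg4 A B" "poly G 1 = 1"
  shows "cg4 (pcompose A G) (pcompose B G)"
proof -
  have "coeff (Tsh G - 1) 0 = 0" using assms(2) by (simp add: coeff0_Tsh)
  moreover have "Jm 4 (Tsh (A - B))" using assms(1) unfolding cg4_def by simp
  ultimately have "Jm 4 (pcompose (Tsh (A - B)) (Tsh G - 1))" by (intro Jm_pcompose)
  then show ?thesis unfolding cg4_def Tsh_pcompose[symmetric] by (simp add: pcompose_diff)
qed

lemma coeff_pow1: "coeff (P ^ Suc N) 1 = of_nat (Suc N) * coeff P 0 ^ N * coeff (P::int poly) 1"
proof (induction N)
  case 0 then show ?case by simp
next
  case (Suc N)
  have "coeff (P ^ Suc (Suc N)) 1 = coeff (P * P ^ Suc N) 1" by simp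
  also have "\<dots> = coeff P 0 * coeff (P ^ Suc N) 1 + coeff P 1 * coeff (P ^ Suc N) 0" by (rule cm1)
  also have "\<dots> = of_nat (Suc (Suc N)) * coeff P 0 ^ Suc N * coeff P 1"
    unfolding Suc coeff_0_power by (simp add: algebra_simps)
  finally show ?case .
qed

lemma Tsh_monom_coeff1: "coeff (Tsh (monom 1 k)) 1 = int k"
  using pow11[of k] by simp




section \<open>Roots of unity in the ring\<close>

lemma root_unity_ring:
  assumes i: "i \<ge> 1"
  shows "(ev Z (omega i)) ^ (5 ^ e) = 1 \<Longrightarrow> (ev Z (omega i)) ^ (5 ^ i) = 1"
proof (induction e arbitrary: Z)
  case 0 then show ?case by simp
next
  case (Suc e)
  define z where "z = ev Z (omega i)"
  define m where "m = (5::nat) ^ (i - 1)"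
  have n: "(5::nat) ^ i = 5 * m" unfolding m_def by (rule five_pow_eq[OF i])
  have "(ev (Z ^ 5) (omega i)) ^ (5 ^ e) = 1"
    using Suc.prems by (simp add: power_mult[symmetric] mult.commute)
  then have "(ev (Z ^ 5) (omega i)) ^ (5 ^ i) = 1" by (rule Suc.IH)
  then have z5: "(z ^ 5) ^ (5 ^ i) = 1" unfolding z_def by simp
  obtain k where k: "k < 5 ^ i" "z ^ 5 = omega i ^ k" using omega_roots[OF z5] by blast
  show ?case
  proof (cases "5 dvd k")
    case True
    then obtain l where l: "k = 5 * l" by (elim dvdE)
    have "z ^ (5 ^ i) = (z ^ 5) ^ m" unfolding n by (simp add: power_mult)
    also have "\<dots> = omega i ^ (5 ^ i * l)" unfolding k(2) l n by (simp add: power_mult[symmetric] ac_simps)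
    also have "\<dots> = 1" by (simp add: power_mult)
    finally show ?thesis unfolding z_def .
  next
    case False
    have "ev (Z ^ 5 - monom 1 k) (omega i) = 0" using k(2) unfolding z_def by simp
    then have "cg4 (Z ^ 5) (monom 1 k)" by (intro cg4_vanish[OF i]) simp
    then have "5 dvd coeff (Tsh Z ^ 5) 1 - coeff (Tsh (monom 1 k)) 1"
      unfolding cg4_def Jm_def by simp
    then have "5 dvd 5 * coeff (Tsh Z) 0 ^ 4 * coeff (Tsh Z) 1 - int k"
      using coeff_pow1[of "Tsh Z" 4] Tsh_monom_coeff1[of k] by (simp add: eval_nat_numeral)
    then obtain q where q: "5 * coeff (Tsh Z) 0 ^ 4 * coeff (Tsh Z) 1 - int k = 5 * q" by (elim dvdE)
    then have "int k = 5 * (coeff (Tsh Z) 0 ^ 4 * coeff (Tsh Z) 1 - q)" by (simp add: algebra_simps)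
    then have "(5::int) dvd int k" by simp
    then have "5 dvd k" by presburger
    with False show ?thesis by simp
  qed
qed

lemma five_decomp: "M > 0 \<Longrightarrow> \<exists>e M'. M = 5 ^ e * M' \<and> \<not> 5 dvd (M'::nat)"
proof (induction M rule: less_induct)
  case (less M)
  show ?case
  proof (cases "5 dvd M")
    case True
    then obtain M1 where M1: "M = 5 * M1" by (elim dvdE)
    with less.prems have "M1 < M" "M1 > 0" by auto
    then obtain e M' where "M1 = 5 ^ e * M'" "\<not> 5 dvd M'" using less.IH by blast
    then show ?thesis using M1 by (intro exI[of _ "Suc e"] exI[of _ M']) simp
  next
    case False then show ?thesis by (intro exI[of _ 0] exI[of _ M]) simp
  qed
qed

section \<open>Kronecker-type argument\<close>

definition trc :: "nat \<Rightarrow> int poly \<Rightarrow> complex" where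
  "trc i P = (\<Sum>k\<in>Sset i. ev P (omega i ^ k))"

lemma trc_diff: "trc i (P - Q) = trc i P - trc i Q"
  unfolding trc_def by (simp add: sum_subtractf)

lemma kronecker:
  assumes i: "i \<ge> 1" and W: "\<And>k. k \<in> Sset i \<Longrightarrow> norm (ev W (omega i ^ k)) = 1"
  shows "\<exists>M>0. ev W (omega i) ^ M = 1"
proof -
  define n where "n = (5::nat) ^ i"
  define B where "B = int (card (Sset i))"
  define vec where "vec a = restrict (\<lambda>r. \<lfloor>Re (trc i (W ^ a * monom 1 r))\<rfloor>) {..<n}" for a
  have trint: "trc i P \<in> \<int>" for P unfolding trc_def by (rule trace_int[OF i])
  have vec_eq: "of_int (vec a r) = trc i (W ^ a * monom 1 r)" if "r < n" for a r
  proof -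
    obtain c where c: "trc i (W ^ a * monom 1 r) = of_int c" using trint[of "W ^ a * monom 1 r"] by (elim Ints_cases)
    then show ?thesis using that unfolding vec_def by simp
  qed
  have bound: "\<bar>vec a r\<bar> \<le> B" if "r < n" for a r
  proof -
    have "norm (trc i (W ^ a * monom 1 r)) \<le> (\<Sum>k\<in>Sset i. norm (ev (W ^ a * monom 1 r) (omega i ^ k)))"
      unfolding trc_def by (rule norm_sum)
    also have "\<dots> = (\<Sum>k\<in>Sset i. 1)"
      by (intro sum.cong refl) (simp add: norm_mult norm_power W)
    finally have "norm (of_int (vec a r) :: complex) \<le> of_int B"
      unfolding vec_eq[OF that] B_def by simp
    then show ?thesis by (simp only: norm_of_int of_int_abs[symmetric] of_int_le_iff)
  qed
  have vin: "vec a \<in> PiE {..<n} (\<lambda>_. {-B..B})" for a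
  proof (rule PiE_I)
    fix r assume "r \<in> {..<n}"
    then have "\<bar>vec a r\<bar> \<le> B" using bound by simp
    then show "vec a r \<in> {-B..B}" by (simp add: abs_le_iff)
  next
    fix r assume "r \<notin> {..<n}"
    then show "vec a r = undefined" unfolding vec_def by simp
  qed
  have "finite (PiE {..<n} (\<lambda>_. {-B..B}))" by (intro finite_PiE) simp_all
  then have "finite (range vec)" using vin by (meson finite_subset image_subsetI)
  then have "\<not> inj vec" using finite_imageD by blast
  then obtain a b where ab: "a \<noteq> b" "vec a = vec b" unfolding inj_def by blast
  have main: "ev W (omega i) ^ a = ev W (omega i) ^ b" if ab: "vec a = vec b" for a b
  proof -
    define D where "D = W ^ b - W ^ a"
    have trD: "trc i (D * monom 1 r) = 0" if "r < n" for r
    proof -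
      have "trc i (D * monom 1 r) = trc i (W ^ b * monom 1 r) - trc i (W ^ a * monom 1 r)"
        unfolding D_def by (simp add: algebra_simps trc_diff)
      also have "\<dots> = 0" using vec_eq[OF that, of a] vec_eq[OF that, of b] ab by simp
      finally show ?thesis .
    qed
    define rd where "rd d = ((n - 1) * d) mod n" for d
    have cnjD: "cnj (ev D (omega i ^ k)) = (\<Sum>d\<le>degree D. of_int (coeff D d) * (omega i ^ k) ^ rd d)" for k
    proof -
      have "cnj (ev D (omega i ^ k)) = ev D (omega i ^ ((n - 1) * k))"
        by (simp only: ev_cnj cnj_omega_pow n_def)
      also have "\<dots> = (\<Sum>d\<le>degree D. of_int (coeff D d) * (omega i ^ k) ^ rd d)"
      proof -
        have "(omega i ^ ((n - 1) * k)) ^ d = (omega i ^ k) ^ rd d" for d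
        proof -
          have "(omega i ^ ((n - 1) * k)) ^ d = omega i ^ (k * ((n - 1) * d))"
            by (simp add: power_mult[symmetric] ac_simps)
          also have "\<dots> = omega i ^ (k * rd d)" unfolding rd_def n_def
            by (rule omega_pow_eq) (simp add: mod_mult_right_eq)
          finally show ?thesis by (simp add: power_mult)
        qed
        then show ?thesis by (simp add: ev_altdef)
      qed
      finally show ?thesis .
    qed
    have rdn: "rd d < n" for d unfolding rd_def n_def by simp
    have "(\<Sum>k\<in>Sset i. ev D (omega i ^ k) * cnj (ev D (omega i ^ k)))
        = (\<Sum>k\<in>Sset i. \<Sum>d\<le>degree D. of_int (coeff D d) * (ev D (omega i ^ k) * (omega i ^ k) ^ rd d))"
      unfolding cnjD by (simp add: sum_distrib_left ac_simps)
    also have "\<dots> = (\<Sum>d\<le>degree D. of_int (coeff D d) * trc i (D * monom 1 (rd d)))"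
      unfolding trc_def by (subst sum.swap) (simp add: sum_distrib_left)
    also have "\<dots> = 0" using trD[OF rdn] by simp
    finally have sum0: "(\<Sum>k\<in>Sset i. ev D (omega i ^ k) * cnj (ev D (omega i ^ k))) = 0" .
    have "(\<Sum>k\<in>Sset i. (norm (ev D (omega i ^ k)))\<^sup>2) = 0"
    proof -
      have "complex_of_real (\<Sum>k\<in>Sset i. (norm (ev D (omega i ^ k)))\<^sup>2) = (\<Sum>k\<in>Sset i. ev D (omega i ^ k) * cnj (ev D (omega i ^ k)))"
        unfolding of_real_sum by (simp only: complex_norm_square)
      then have "complex_of_real (\<Sum>k\<in>Sset i. (norm (ev D (omega i ^ k)))\<^sup>2) = 0" using sum0 by (rule trans)
      then show ?thesis by (simp only: of_real_eq_0_iff)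
    qed
    then have "\<forall>k\<in>Sset i. (norm (ev D (omega i ^ k)))\<^sup>2 = 0"
      by (subst sum_nonneg_eq_0_iff[symmetric]) simp_all
    then have "(norm (ev D (omega i ^ 1)))\<^sup>2 = 0" using one_in_Sset[OF i] by blast
    then have "norm (ev D (omega i ^ 1)) = 0" by simp
    then show ?thesis unfolding D_def by simp
  qed
  have w0: "ev W (omega i) \<noteq> 0" using W[OF one_in_Sset[OF i]] by auto
  {
    fix a b :: nat assume "a < b" and vab: "vec a = vec b"
    have "ev W (omega i) ^ a = ev W (omega i) ^ b" by (rule main[OF vab])
    also have "ev W (omega i) ^ b = ev W (omega i) ^ a * ev W (omega i) ^ (b - a)"
      using \<open>a < b\<close> by (simp add: power_add[symmetric])
    finally have "ev W (omega i) ^ a * ev W (omega i) ^ (b - a) = ev W (omega i) ^ a * 1" by simp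
    then have "ev W (omega i) ^ (b - a) = 1" using w0 by simp
    then have "\<exists>M>0. ev W (omega i) ^ M = 1" using \<open>a < b\<close> by (intro exI[of _ "b - a"]) simp
  }
  note * = this
  show ?thesis
  proof (cases "a < b")
    case True then show ?thesis using * ab by blast
  next
    case False then have "b < a" using ab by simp
    then show ?thesis using * ab by metis
  qed
qed



lemma Tsh_0 [simp]: "Tsh 0 = 0" by (simp add: Tsh_def)

lemma x_pow: "[:0, 1::int:] ^ k = monom 1 k" by (simp add: monom_altdef)

lemma pcompose_power_l: "pcompose (p ^ k) r = (pcompose p r) ^ k"
  by (induction k) (simp_all add: pcompose_mult pcompose_1)

lemma cg4_monom_5pow:
  assumes "a \<ge> 1"
  shows "cg4 (monom 1 (5 ^ a)) 1"
proof -
  have F: "F5 ([:1, 1:] ^ (5 ^ a) - (1 + monom 1 (5 ^ a)))" by (rule frob)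
  have "(5::nat) ^ a \<ge> 5 ^ 1" using assms by (intro power_increasing) simp_all
  then have "Jm 4 (monom (1::int) (5 ^ a))" unfolding Jm_def by simp
  then have "Jm 4 (([:1, 1:] ^ (5 ^ a) - (1 + monom 1 (5 ^ a))) + monom 1 (5 ^ a))"
    using F F5_Jm Jm_add by blast
  then show ?thesis unfolding cg4_def by (simp add: algebra_simps)
qed

lemma cg4_sq_power:
  assumes "cg4 (E * E) 0"
  shows "cg4 ((1 + smult a E) ^ N) (1 + smult (a * of_nat N) E)"
proof (induction N)
  case 0 then show ?case by simp
next
  case (Suc N)
  have "cg4 ((1 + smult a E) * (1 + smult a E) ^ N) ((1 + smult a E) * (1 + smult (a * of_nat N) E))"
    by (rule cg4_mult[OF cg4_refl Suc])
  moreover have "(1 + smult a E) * (1 + smult (a * of_nat N) E)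
      = (1 + smult (a * of_nat (Suc N)) E) + smult (a * (a * of_nat N)) (E * E)"
    by (simp add: algebra_simps smult_add_left smult_add_right)
  moreover have "cg4 ((1 + smult (a * of_nat (Suc N)) E) + smult (a * (a * of_nat N)) (E * E))
      ((1 + smult (a * of_nat (Suc N)) E) + smult (a * (a * of_nat N)) 0)"
    by (intro cg4_add cg4_refl cg4_smult assms)
  ultimately show ?case by (simp add: cg4_trans)
qed

lemma keyK:
  assumes i: "i \<ge> 1" and UV: "ev U (omega i) * ev V (omega i) = 1"
    and J3: "Jm 3 (Tsh U - 1)"
  shows "5 dvd coeff (Tsh U) 3"
proof (rule ccontr)
  assume nc: "\<not> 5 dvd coeff (Tsh U) 3"
  define c where "c = coeff (Tsh U) 3"
  define n where "n = (5::nat) ^ i"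
  define X where "X = [:-1, 1::int:]"
  define E3 where "E3 = smult c (X ^ 3)"
  have n5: "n \<ge> 5" unfolding n_def using i by (simp add: five_pow_eq)
  have TE: "Tsh (smult d E3) = monom (d * c) 3" for d
    unfolding E3_def X_def by (simp add: monom_altdef)
  have E3sq: "cg4 (E3 * E3) 0"
  proof -
    have "Tsh (E3 * E3) = monom (c * c) 6" using TE[of 1] by (simp add: mult_monom)
    then show ?thesis unfolding cg4_def Jm_def by simp
  qed
  have cgU: "cg4 U (1 + E3)"
  proof -
    have "Tsh (1 + E3) = 1 + monom c 3" using TE[of 1] by simp
    moreover have "5 dvd coeff (Tsh U) 0 - 1" "5 dvd coeff (Tsh U) 1" "5 dvd coeff (Tsh U) 2"
      using J3 unfolding Jm3_iff by simp_all
    ultimately show ?thesis unfolding cg4_def Jm4_iff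
      by (simp add: c_def coeff_monom)
  qed
  have UV0: "cg4 (U * V) 1" by (rule cg4_vanish[OF i]) (simp add: UV)
  have p1: "cg4 ((1 + E3) * (1 - E3)) 1"
  proof -
    have "(1 + E3) * (1 - E3) = 1 - E3 * E3" by (simp add: algebra_simps)
    moreover have "cg4 (1 - E3 * E3) (1 - 0)" by (intro cg4_diff cg4_refl E3sq)
    ultimately show ?thesis by simp
  qed
  have cgV: "cg4 V (1 - E3)"
  proof -
    have A: "cg4 (V * 1) (V * ((1 + E3) * (1 - E3)))" by (intro cg4_mult cg4_refl cg4_sym[OF p1])
    have B: "cg4 (V * ((1 + E3) * (1 - E3))) (V * (U * (1 - E3)))"
      by (intro cg4_mult cg4_refl cg4_sym[OF cgU])
    have eq: "V * (U * (1 - E3)) = (U * V) * (1 - E3)" by (simp add: ac_simps)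
    have D: "cg4 ((U * V) * (1 - E3)) (1 * (1 - E3))" by (intro cg4_mult cg4_refl UV0)
    have "cg4 V (V * (U * (1 - E3)))" using cg4_trans[OF A B] by simp
    then have "cg4 V ((U * V) * (1 - E3))" unfolding eq .
    from cg4_trans[OF this D] show ?thesis by simp
  qed
  define G where "G = monom (1::int) (n - 1)"
  have G1: "poly G 1 = 1" unfolding G_def by (simp add: poly_monom)
  define Vc where "Vc = pcompose V G"
  have XG: "pcompose X G = G - 1" unfolding X_def by (simp add: pcompose_pCons one_pCons)
  have "cg4 Vc (pcompose (1 - E3) G)" unfolding Vc_def by (rule cg4_pcompose[OF cgV G1])
  moreover have "pcompose (1 - E3) G = 1 - smult c ((G - 1) ^ 3)"
    unfolding E3_def by (simp add: pcompose_diff pcompose_1 pcompose_smult pcompose_power_l XG)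
  ultimately have cgVc1: "cg4 Vc (1 - smult c ((G - 1) ^ 3))" by simp
  define Y4 where "Y4 = 1 - X + X ^ 2 - X ^ 3"
  have x1: "monom (1::int) 1 = 1 + X" unfolding X_def by (simp add: monom_altdef one_pCons)
  have xY4: "cg4 (monom 1 1 * Y4) 1"
  proof -
    have "monom 1 1 * Y4 = 1 - X ^ 4" unfolding x1 Y4_def by (simp add: algebra_simps eval_nat_numeral)
    moreover have "cg4 (1 - X ^ 4) (1 - 0)"
    proof (intro cg4_diff cg4_refl)
      show "cg4 (X ^ 4) 0" unfolding cg4_def X_def by (simp add: Jm_def x_pow coeff_monom)
    qed
    ultimately show ?thesis by simp
  qed
  have xn: "cg4 (monom 1 n) 1" unfolding n_def by (rule cg4_monom_5pow[OF i])
  have GY: "cg4 G Y4"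
  proof -
    have A: "cg4 (G * 1) (G * (monom 1 1 * Y4))" by (intro cg4_mult cg4_refl cg4_sym[OF xY4])
    have eq: "G * (monom 1 1 * Y4) = monom 1 n * Y4"
      unfolding G_def using n5 by (simp add: mult.assoc[symmetric] mult_monom)
    have D: "cg4 (monom 1 n * Y4) (1 * Y4)" by (intro cg4_mult cg4_refl xn)
    have "cg4 G (monom 1 n * Y4)" using A unfolding eq by simp
    from cg4_trans[OF this D] show ?thesis by simp
  qed
  have cube: "(Y4 - 1) ^ 3 = - (X ^ 3) - X ^ 4 * ((X - 1) * (3 + 3 * (X^2 - X) + (X^2 - X)^2))"
    unfolding Y4_def by (simp add: algebra_simps eval_nat_numeral)
  have cgcube: "cg4 ((G - 1) ^ 3) (- (X ^ 3))"
  proof -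
    have "cg4 ((G - 1) ^ 3) ((Y4 - 1) ^ 3)" by (intro cg4_power cg4_diff GY cg4_refl)
    moreover have "cg4 ((Y4 - 1) ^ 3) (- (X ^ 3) - 0)"
      unfolding cube
    proof (intro cg4_diff cg4_refl)
      show "cg4 (X ^ 4 * ((X - 1) * (3 + 3 * (X^2 - X) + (X^2 - X)^2))) 0"
      proof -
        have "Jm 4 (monom (1::int) 4)" by (simp add: Jm_def coeff_monom)
        then show ?thesis unfolding cg4_def by (simp add: X_def x_pow Jm_mult)
      qed
    qed
    ultimately show ?thesis by (simp add: cg4_trans)
  qed
  have cgVc: "cg4 Vc (1 + E3)"
  proof -
    have "cg4 (1 - smult c ((G - 1) ^ 3)) (1 - smult c (- (X ^ 3)))"
      by (intro cg4_diff cg4_refl cg4_smult cgcube)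
    then show ?thesis using cgVc1 unfolding E3_def by (simp add: cg4_trans)
  qed
  define W where "W = U * Vc"
  have cgW: "cg4 W (1 + smult 2 E3)"
  proof -
    have "cg4 W ((1 + E3) * (1 + E3))" unfolding W_def by (intro cg4_mult cgU cgVc)
    moreover have "(1 + E3) * (1 + E3) = (1 + smult 2 E3) + E3 * E3"
    proof -
      have "smult 2 E3 = E3 + E3" by (metis one_add_one smult_add_left smult_1_left)
      then show ?thesis by (simp add: algebra_simps)
    qed
    moreover have "cg4 ((1 + smult 2 E3) + E3 * E3) ((1 + smult 2 E3) + 0)"
      by (intro cg4_add cg4_refl E3sq)
    ultimately show ?thesis by (simp add: cg4_trans)
  qed
  have normW: "norm (ev W (omega i ^ k)) = 1" if k: "k \<in> Sset i" for k
  proof -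
    define z where "z = omega i ^ k"
    have k5: "\<not> 5 dvd k" using k unfolding Sset_def by simp
    have "ev (U * V - 1) (omega i) = 0" using UV by simp
    then have "ev (U * V - 1) z = 0" unfolding z_def by (rule galois[OF i _ k5])
    then have uvz: "ev U z * ev V z = 1" by simp
    have "ev G z = z ^ (n - 1)" unfolding G_def by simp
    also have "\<dots> = omega i ^ ((5 ^ i - 1) * k)" unfolding z_def n_def
      by (simp only: power_mult[symmetric] mult.commute)
    also have "\<dots> = cnj z" unfolding z_def by (rule cnj_omega_pow[symmetric])
    finally have "ev G z = cnj z" .
    then have "ev W z = ev U z * cnj (ev V z)" unfolding W_def Vc_def by (simp add: ev_cnj)
    then have "norm (ev W z) = norm (ev U z * ev V z)" by (simp add: norm_mult)
    then show ?thesis using uvz unfolding z_def by simp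
  qed
  obtain M where M: "M > 0" "ev W (omega i) ^ M = 1" using kronecker[OF i normW] by blast
  obtain e M' where eM: "M = 5 ^ e * M'" "\<not> 5 dvd M'" using five_decomp[OF M(1)] by blast
  define Z where "Z = W ^ M'"
  have "ev Z (omega i) ^ (5 ^ e) = 1" unfolding Z_def using M(2) eM(1)
    by (simp add: power_mult[symmetric] mult.commute)
  then have "ev Z (omega i) ^ (5 ^ i) = 1" by (rule root_unity_ring[OF i])
  then obtain k where k: "k < 5 ^ i" "ev Z (omega i) = omega i ^ k" using omega_roots by blast
  have cgZk: "cg4 Z (monom 1 k)" by (rule cg4_vanish[OF i]) (simp add: k(2))
  have cgZ: "cg4 Z (1 + smult (2 * of_nat M') E3)"
    unfolding Z_def by (rule cg4_trans[OF cg4_power[OF cgW] cg4_sq_power[OF E3sq]])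
  have kc: "cg4 (monom 1 k) (1 + smult (2 * of_nat M') E3)" by (rule cg4_trans[OF cg4_sym[OF cgZk] cgZ])
  then have "Jm 4 (Tsh (monom 1 k) - Tsh (1 + smult (2 * of_nat M') E3))" unfolding cg4_def .
  then have "5 dvd coeff (Tsh (monom 1 k) - Tsh (1 + smult (2 * of_nat M') E3)) 1"
    unfolding Jm4_iff by blast
  then have "(5::int) dvd int k" unfolding coeff_diff Tsh_add Tsh_1 TE Tsh_monom_coeff1 by simp
  then have "5 dvd k" by presburger
  then obtain l where l: "k = 5 * l" by (elim dvdE)
  have "cg4 (monom 1 k) 1"
  proof -
    have "monom (1::int) k = monom 1 5 ^ l" unfolding l by (simp add: monom_mult_pow[symmetric] mult.commute)
    moreover have "cg4 (monom 1 5 ^ l) (1 ^ l)" by (intro cg4_power) (rule cg4_monom_5pow[of 1, simplified])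
    ultimately show ?thesis by simp
  qed
  with kc have "cg4 1 (1 + smult (2 * of_nat M') E3)" by (metis cg4_trans cg4_sym)
  then have "Jm 4 (Tsh 1 - Tsh (1 + smult (2 * of_nat M') E3))" unfolding cg4_def .
  then have "5 dvd coeff (Tsh 1 - Tsh (1 + smult (2 * of_nat M') E3)) 3"
    unfolding Jm4_iff by blast
  then have "5 dvd (2 * int M') * c" unfolding coeff_diff Tsh_add Tsh_1 TE by simp
  moreover have "\<not> (5::int) dvd 2 * int M'" using eM(2) by (intro not5_mult) presburger+
  moreover have "\<not> 5 dvd c" using nc unfolding c_def .
  ultimately show False using not5_mult by blast
qed


lemma part3:
  assumes i: "i \<ge> 1"
    and u1: "Zomega_unit i u1" and u2: "Zomega_unit i u2"
    and e1: "u1 * ev f (omega i) = 1 + (omega i - 1) ^ 3 * ev h1 (omega i)"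
    and e2: "u2 * ev f (omega i) = 1 + (omega i - 1) ^ 3 * ev h2 (omega i)"
    and d1: "(5::int) dvd poly h1 1"
  shows "(5::int) dvd poly h2 1"
proof -
  define w where "w = omega i"
  obtain U1 V1 where U1: "u1 = ev U1 w" "u1 * ev V1 w = 1" using Zomega_unit_unitp[OF u1] unfolding unitp_def w_def by blast
  obtain U2 V2 where U2: "u2 = ev U2 w" "u2 * ev V2 w = 1" using Zomega_unit_unitp[OF u2] unfolding unitp_def w_def by blast
  define U where "U = U2 * V1"
  define V where "V = U1 * V2"
  define X where "X = [:-1, 1::int:]"
  have UV: "ev U w * ev V w = 1"
  proof -
    have "ev U w * ev V w = (u1 * ev V1 w) * (u2 * ev V2 w)" unfolding U_def V_def U1(1) U2(1) by (simp add: ac_simps)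
    then show ?thesis using U1(2) U2(2) by simp
  qed
  have eqn: "ev U w * (1 + (w - 1) ^ 3 * ev h1 w) = 1 + (w - 1) ^ 3 * ev h2 w"
  proof -
    have "ev U w * (1 + (w - 1) ^ 3 * ev h1 w) = u2 * ev V1 w * (u1 * ev f w)"
      unfolding U_def U2(1) e1[folded w_def] by simp
    also have "\<dots> = (u1 * ev V1 w) * (u2 * ev f w)" by (simp add: ac_simps)
    also have "\<dots> = 1 + (w - 1) ^ 3 * ev h2 w" using U1(2) e2[folded w_def] by simp
    finally show ?thesis .
  qed
  define E where "E = U * (1 + X ^ 3 * h1) - (1 + X ^ 3 * h2)"
  have "ev E w = 0" unfolding E_def X_def using eqn by simp
  then have JE: "Jm 4 (Tsh E)" unfolding w_def by (rule vanish_Jm[OF i])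
  have TE: "Tsh E = Tsh U - 1 + monom 1 3 * (Tsh U * Tsh h1 - Tsh h2)"
    unfolding E_def X_def by (simp add: x_pow algebra_simps)
  have cE: "coeff (Tsh E) j = coeff (Tsh U - 1) j + (if j < 3 then 0 else coeff (Tsh U * Tsh h1 - Tsh h2) (j - 3))" for j
    unfolding TE by (simp add: coeff_monom_mult)
  have J3: "Jm 3 (Tsh U - 1)" unfolding Jm_def
  proof (intro allI impI)
    fix j :: nat assume j: "j < 3"
    then have "5 dvd coeff (Tsh E) j" using JE unfolding Jm_def by simp
    then show "5 dvd coeff (Tsh U - 1) j" unfolding cE using j by simp
  qed
  have "5 dvd coeff (Tsh E) 3" using JE unfolding Jm4_iff by blast
  then have c3: "5 dvd coeff (Tsh U) 3 + coeff (Tsh U) 0 * poly h1 1 - poly h2 1"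
    unfolding cE by (simp add: coeff_mult_0 coeff0_Tsh algebra_simps)
  have "5 dvd coeff (Tsh U) 3" by (rule keyK[OF i UV[unfolded w_def] J3])
  moreover have "5 dvd coeff (Tsh U) 0 * poly h1 1" using d1 by simp
  ultimately have A: "5 dvd coeff (Tsh U) 3 + coeff (Tsh U) 0 * poly h1 1" by (rule dvd_add)
  have "5 dvd (coeff (Tsh U) 3 + coeff (Tsh U) 0 * poly h1 1) - (coeff (Tsh U) 3 + coeff (Tsh U) 0 * poly h1 1 - poly h2 1)"
    by (rule dvd_diff[OF A c3])
  then show ?thesis by simp
qed

theorem lemma3p1:
  fixes i :: nat and f :: "int poly"
  assumes "i \<ge> 1"
    and "\<not> (\<exists>k::int. Nnorm i f = 5 * of_int k)"
  shows "(\<exists>u h. Zomega_unit i u \<and>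
            u * ev f (omega i) = 1 + (omega i - 1) ^ 3 * ev h (omega i))
       \<and> (\<exists>(s::int) (I::nat) (J::nat) (K::nat) h.
            s \<in> {1, -1} \<and> J \<in> {0, 1} \<and> I \<le> 4 \<and> K \<le> 4 \<and>
            of_int s * omega i ^ I * (1 + omega i) ^ J * (omega i ^ 4 + omega i) ^ (2 * K)
              * ev f (omega i) = 1 + (omega i - 1) ^ 3 * ev h (omega i))
       \<and> \<not> (\<exists>u1 u2 h1 h2. Zomega_unit i u1 \<and> Zomega_unit i u2 \<and>
            u1 * ev f (omega i) = 1 + (omega i - 1) ^ 3 * ev h1 (omega i) \<and>
            u2 * ev f (omega i) = 1 + (omega i - 1) ^ 3 * ev h2 (omega i) \<and>
            (5::int) dvd poly h1 1 \<and> \<not> (5::int) dvd poly h2 1)"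
proof -
  have i: "i \<ge> 1" by (rule assms(1))
  have f5: "\<not> 5 dvd poly f 1" using hyp5[OF i] assms(2) by blast
  obtain s I J K where s: "s \<in> {1, -1}" and J: "J \<in> {0, 1}" and I: "I \<le> 4" and K: "K \<le> 4"
    and JJ: "Jm 3 (Tsh ([:s:] * monom 1 I * [:1, 1:] ^ J * (monom 1 4 + monom 1 1) ^ (2 * K) * f - 1))"
    using choose_sIJK[OF f5] by blast
  obtain h where h: "ev ([:s:] * monom 1 I * [:1, 1:] ^ J * (monom 1 4 + monom 1 1) ^ (2 * K) * f) (omega i)
      = 1 + (omega i - 1) ^ 3 * ev h (omega i)"
    using crit3[OF i JJ] by blast
  define u where "u = of_int s * omega i ^ I * (1 + omega i) ^ J * (omega i ^ 4 + omega i) ^ (2 * K)"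
  have hu: "u * ev f (omega i) = 1 + (omega i - 1) ^ 3 * ev h (omega i)"
    using h unfolding u_def by (simp add: ac_simps)
  have "unitp i u" unfolding u_def
    by (intro unitp_mult unitp_power unitp_sign[OF s] unitp_omega unitp_generators[OF i])
  then have uu: "Zomega_unit i u" by (rule unitp_Zomega_unit)
  have P1: "\<exists>u h. Zomega_unit i u \<and> u * ev f (omega i) = 1 + (omega i - 1) ^ 3 * ev h (omega i)"
    using uu hu by blast
  have P2: "\<exists>(s::int) (I::nat) (J::nat) (K::nat) h.
            s \<in> {1, -1} \<and> J \<in> {0, 1} \<and> I \<le> 4 \<and> K \<le> 4 \<and>
            of_int s * omega i ^ I * (1 + omega i) ^ J * (omega i ^ 4 + omega i) ^ (2 * K)
              * ev f (omega i) = 1 + (omega i - 1) ^ 3 * ev h (omega i)"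
    using s J I K hu unfolding u_def by blast
  have P3: "\<not> (\<exists>u1 u2 h1 h2. Zomega_unit i u1 \<and> Zomega_unit i u2 \<and>
            u1 * ev f (omega i) = 1 + (omega i - 1) ^ 3 * ev h1 (omega i) \<and>
            u2 * ev f (omega i) = 1 + (omega i - 1) ^ 3 * ev h2 (omega i) \<and>
            (5::int) dvd poly h1 1 \<and> \<not> (5::int) dvd poly h2 1)"
    using part3[OF i] by blast
  show ?thesis using P1 P2 P3 by blast
qed


end
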